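(* Let $A\in\mathbb R^{d^2\times d^2}$ and let $x=x_1\otimes x_2$, where $x_1,x_2\in\mathbb R^d$ are independent, each a Rademacher vector or a $\mathcal N(0,I_d)$ vector. Let $\bar A=\frac14\big(A+A^{\Gamma_{\{1\}}}+A^{\Gamma_{\{2\}}}+A^\top\big)$. Then $$\operatorname{Var}[x^\top Ax]\le 2\|\operatorname{tr}_{\{1\}}(\bar A)\|_F^2+2\|\operatorname{tr}_{\{2\}}(\bar A)\|_F^2+4\|\bar A\|_F^2 .$$ Moreover, there is an absolute constant $C$ such that if $A$ is PSD, $\varepsilon\in(0,1)$ and $\ell\ge C\varepsilon^{-2}$, then with probability at least $2/3$ the Kronecker–Hutchinson estimator satisfies $|H_\ell(A)-\operatorname{tr}(A)|\le\varepsilon\operatorname{tr}(A)$.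
   Context: Write $A\in\mathbb R^{d^2\times d^2}$ as a $d\times d$ block matrix with blocks $A_{ij}\in\mathbb R^{d\times d}$. Then $\operatorname{tr}_{\{1\}}(A)=\sum_{i=1}^dA_{ii}$, $\operatorname{tr}_{\{2\}}(A)$ is the $d\times d$ matrix with $(i,j)$ entry $\operatorname{tr}(A_{ij})$, $A^{\Gamma_{\{1\}}}$ is the block matrix with $(i,j)$ block $A_{ji}$, and $A^{\Gamma_{\{2\}}}$ is the block matrix with $(i,j)$ block $A_{ij}^\top$. A Rademacher vector has iid entries uniform on $\{\pm1\}$. $H_\ell(A)=\frac1\ell\sum_{j=1}^\ell (x^{(j)})^\top Ax^{(j)}$ with $x^{(j)}$ iid copies of $x$. *)

theory Defs
  imports "HOL-Probability.Probability"
begin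

text \<open>Matrices in R^(d^2 x d^2) are functions on index pairs (i,a), i,a < d;
  row index (i,a) = row a of block row i. Vectors in R^d are functions nat => real.\<close>

type_synonym bmat = "nat \<times> nat \<Rightarrow> nat \<times> nat \<Rightarrow> real"

definition ptr1 :: "nat \<Rightarrow> bmat \<Rightarrow> nat \<Rightarrow> nat \<Rightarrow> real" where
  "ptr1 d A a b = (\<Sum>i<d. A (i,a) (i,b))"

definition ptr2 :: "nat \<Rightarrow> bmat \<Rightarrow> nat \<Rightarrow> nat \<Rightarrow> real" where
  "ptr2 d A i j = (\<Sum>a<d. A (i,a) (j,a))"

definition ptrans1 :: "bmat \<Rightarrow> bmat" where
  "ptrans1 A = (\<lambda>(i,a) (j,b). A (j,a) (i,b))"

definition ptrans2 :: "bmat \<Rightarrow> bmat" where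
  "ptrans2 A = (\<lambda>(i,a) (j,b). A (i,b) (j,a))"

definition btrans :: "bmat \<Rightarrow> bmat" where
  "btrans A = (\<lambda>p q. A q p)"

definition sym_bar :: "bmat \<Rightarrow> bmat" where
  "sym_bar A = (\<lambda>p q. (A p q + ptrans1 A p q + ptrans2 A p q + btrans A p q) / 4)"

definition frob_sq :: "nat \<Rightarrow> (nat \<Rightarrow> nat \<Rightarrow> real) \<Rightarrow> real" where
  "frob_sq d M = (\<Sum>i<d. \<Sum>j<d. (M i j)\<^sup>2)"

definition bfrob_sq :: "nat \<Rightarrow> bmat \<Rightarrow> real" where
  "bfrob_sq d A = (\<Sum>p\<in>{..<d}\<times>{..<d}. \<Sum>q\<in>{..<d}\<times>{..<d}. (A p q)\<^sup>2)"

definition btrace :: "nat \<Rightarrow> bmat \<Rightarrow> real" where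
  "btrace d A = (\<Sum>p\<in>{..<d}\<times>{..<d}. A p p)"

definition kron :: "(nat \<Rightarrow> real) \<Rightarrow> (nat \<Rightarrow> real) \<Rightarrow> nat \<times> nat \<Rightarrow> real" where
  "kron u v = (\<lambda>(i,a). u i * v a)"

definition qform :: "nat \<Rightarrow> bmat \<Rightarrow> (nat \<times> nat \<Rightarrow> real) \<Rightarrow> real" where
  "qform d A x = (\<Sum>p\<in>{..<d}\<times>{..<d}. \<Sum>q\<in>{..<d}\<times>{..<d}. x p * A p q * x q)"

definition bpsd :: "nat \<Rightarrow> bmat \<Rightarrow> bool" where
  "bpsd d A \<longleftrightarrow> (\<forall>p\<in>{..<d}\<times>{..<d}. \<forall>q\<in>{..<d}\<times>{..<d}. A p q = A q p)
                 \<and> (\<forall>x. 0 \<le> qform d A x)"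

definition rademacher :: "real measure" where
  "rademacher = measure_pmf (pmf_of_set {-1, 1})"

definition rad_vec :: "nat \<Rightarrow> (nat \<Rightarrow> real) measure" where
  "rad_vec d = PiM {..<d} (\<lambda>_. rademacher)"

definition gauss_vec :: "nat \<Rightarrow> (nat \<Rightarrow> real) measure" where
  "gauss_vec d = PiM {..<d} (\<lambda>_. std_normal_distribution)"

definition pair_dist :: "(nat \<Rightarrow> real) measure \<Rightarrow> (nat \<Rightarrow> real) measure \<Rightarrow> ((nat \<Rightarrow> real) \<times> (nat \<Rightarrow> real)) measure" where
  "pair_dist D1 D2 = D1 \<Otimes>\<^sub>M D2"

definition hutch :: "nat \<Rightarrow> bmat \<Rightarrow> nat \<Rightarrow> (nat \<Rightarrow> (nat \<Rightarrow> real) \<times> (nat \<Rightarrow> real)) \<Rightarrow> real" where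
  "hutch d A l \<omega> = (1 / real l) * (\<Sum>j<l. qform d A (kron (fst (\<omega> j)) (snd (\<omega> j))))"

end

theory Submission
  imports Defs
begin

definition mom :: "real \<Rightarrow> nat \<Rightarrow> real" where
  "mom \<kappa> n = (if n = 0 then 1 else if n = 2 then 1 else if n = 4 then 3 + \<kappa> else 0)"

definition good :: "real measure \<Rightarrow> real \<Rightarrow> bool" where
  "good \<mu> \<kappa> \<longleftrightarrow> prob_space \<mu> \<and> (\<lambda>t. t) \<in> borel_measurable \<mu> \<and>
     (\<forall>n\<le>4. integrable \<mu> (\<lambda>t. t^n) \<and> integral\<^sup>L \<mu> (\<lambda>t. t^n) = mom \<kappa> n) \<and> -2 \<le> \<kappa> \<and> \<kappa> \<le> 0"

lemma good_rad: "good rademacher (-2)"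
proof -
  have "\<forall>n\<le>4. integrable rademacher (\<lambda>t. t^n) \<and> integral\<^sup>L rademacher (\<lambda>t. t^n) = mom (-2) n"
  proof (intro allI impI conjI)
    fix n :: nat assume n: "n \<le> 4"
    show "integrable rademacher (\<lambda>t. t^n)" unfolding rademacher_def
      by (rule integrable_measure_pmf_finite) simp
    have "integral\<^sup>L rademacher (\<lambda>t. t^n) = ((-1)^n + 1) / 2"
      unfolding rademacher_def by (subst integral_pmf_of_set) auto
    also have "\<dots> = mom (-2) n"
    proof -
      consider "n = 0" | "n = 1" | "n = 2" | "n = 3" | "n = 4" using n by linarith
      then show ?thesis by cases (auto simp: mom_def)
    qed
    finally show "integral\<^sup>L rademacher (\<lambda>t. t^n) = mom (-2) n" .
  qed
  moreover have "prob_space rademacher" unfolding rademacher_def by (rule prob_space_measure_pmf)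
  moreover have "(\<lambda>t. t) \<in> borel_measurable rademacher" unfolding rademacher_def by simp
  ultimately show ?thesis unfolding good_def by simp
qed

lemma good_gauss: "good std_normal_distribution 0"
proof -
  have "\<forall>n\<le>4. integrable std_normal_distribution (\<lambda>t. t^n) \<and> integral\<^sup>L std_normal_distribution (\<lambda>t. t^n) = mom 0 n"
  proof (intro allI impI conjI)
    fix n :: nat assume n: "n \<le> 4"
    show "integrable std_normal_distribution (\<lambda>t. t^n)" by (rule integrable_std_normal_distribution_moment)
    consider "n = 0" | "n = 1" | "n = 2" | "n = 3" | "n = 4" using n by linarith
    then show "integral\<^sup>L std_normal_distribution (\<lambda>t. t^n) = mom 0 n"
    proof cases
      case 1 then show ?thesis using std_normal_distribution_even_moments(1)[of 0] by (simp add: mom_def)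
    next
      case 2 then show ?thesis using integral_std_normal_distribution_moment_odd[of 1] by (simp add: mom_def)
    next
      case 3 then show ?thesis using std_normal_distribution_even_moments(1)[of 1] by (simp add: mom_def)
    next
      case 4 then show ?thesis using integral_std_normal_distribution_moment_odd[of 3] by (simp add: mom_def)
    next
      case 5 then show ?thesis using std_normal_distribution_even_moments(1)[of 2]
        by (simp add: mom_def fact_numeral)
    qed
  qed
  moreover have "prob_space std_normal_distribution" using real_dist_normal_dist
    by (simp add: real_distribution_def)
  moreover have "(\<lambda>t. t) \<in> borel_measurable std_normal_distribution" by simp
  ultimately show ?thesis unfolding good_def by simp
qed

lemma PiM_prod:
  fixes f :: "'i \<Rightarrow> 'a \<Rightarrow> real"
  assumes P: "prob_space P" and I: "finite I" and f: "\<And>i. i \<in> I \<Longrightarrow> integrable P (f i)"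
  shows "integrable (PiM I (\<lambda>_. P)) (\<lambda>x. \<Prod>i\<in>I. f i (x i))"
    and "integral\<^sup>L (PiM I (\<lambda>_. P)) (\<lambda>x. \<Prod>i\<in>I. f i (x i)) = (\<Prod>i\<in>I. integral\<^sup>L P (f i))"
proof -
  interpret prob_space P by fact
  interpret product_prob_space "\<lambda>_. P" I by unfold_locales
  show "integrable (PiM I (\<lambda>_. P)) (\<lambda>x. \<Prod>i\<in>I. f i (x i))"
    by (rule product_integrable_prod[OF I f])
  show "integral\<^sup>L (PiM I (\<lambda>_. P)) (\<lambda>x. \<Prod>i\<in>I. f i (x i)) = (\<Prod>i\<in>I. integral\<^sup>L P (f i))"
    by (rule product_integral_prod[OF I f])
qed

lemma good_prob: "good \<mu> \<kappa> \<Longrightarrow> prob_space \<mu>" by (simp add: good_def)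

lemma vec_mono:
  fixes d :: nat
  assumes g: "good \<mu> \<kappa>" and c: "\<And>m. c m \<le> 4"
  shows "integrable (PiM {..<d} (\<lambda>_. \<mu>)) (\<lambda>x. \<Prod>m<d. x m ^ c m)"
    and "integral\<^sup>L (PiM {..<d} (\<lambda>_. \<mu>)) (\<lambda>x. \<Prod>m<d. x m ^ c m) = (\<Prod>m<d. mom \<kappa> (c m))"
proof -
  have f: "\<And>m. integrable \<mu> (\<lambda>t. t ^ c m)" "\<And>m. integral\<^sup>L \<mu> (\<lambda>t. t ^ c m) = mom \<kappa> (c m)"
    using g c unfolding good_def by auto
  show "integrable (PiM {..<d} (\<lambda>_. \<mu>)) (\<lambda>x. \<Prod>m<d. x m ^ c m)"
    using PiM_prod(1)[OF good_prob[OF g] finite_lessThan, of d "\<lambda>m t. t ^ c m"] f by simp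
  show "integral\<^sup>L (PiM {..<d} (\<lambda>_. \<mu>)) (\<lambda>x. \<Prod>m<d. x m ^ c m) = (\<Prod>m<d. mom \<kappa> (c m))"
    using PiM_prod(2)[OF good_prob[OF g] finite_lessThan, of d "\<lambda>m t. t ^ c m"] f by simp
qed

definition e4 :: "real \<Rightarrow> nat \<Rightarrow> nat \<Rightarrow> nat \<Rightarrow> nat \<Rightarrow> real" where
  "e4 \<kappa> i j k l = of_bool (i = j \<and> k = l) + of_bool (i = k \<and> j = l) + of_bool (i = l \<and> j = k)
     + \<kappa> * of_bool (i = j \<and> j = k \<and> k = l)"

lemma prod_pow_delta:
  fixes x :: "nat \<Rightarrow> real"
  assumes "i < d"
  shows "(\<Prod>m<d. x m ^ of_bool (i = m)) = x i"
proof -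
  have "(\<Prod>m<d. x m ^ of_bool (i = m)) = (\<Prod>m<d. if m = i then x m else 1)"
    by (rule prod.cong) auto
  also have "\<dots> = x i" using assms by (simp add: prod.delta)
  finally show ?thesis .
qed

lemma prod_four:
  fixes x :: "nat \<Rightarrow> real"
  assumes "i < d" "j < d" "k < d" "l < d"
  shows "x i * x j * x k * x l =
    (\<Prod>m<d. x m ^ (of_bool (i = m) + of_bool (j = m) + of_bool (k = m) + of_bool (l = m)))"
  by (simp add: power_add prod.distrib prod_pow_delta assms)

lemma prod_two:
  fixes x :: "nat \<Rightarrow> real"
  assumes "i < d" "j < d"
  shows "x i * x j = (\<Prod>m<d. x m ^ (of_bool (i = m) + of_bool (j = m)))"
  by (simp add: power_add prod.distrib prod_pow_delta assms)

lemma prod_mom_reduce: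
  fixes d :: nat
  assumes "finite F" "F \<subseteq> {..<d}" "\<And>m. m \<notin> F \<Longrightarrow> c m = 0"
  shows "(\<Prod>m<d. mom \<kappa> (c m)) = (\<Prod>m\<in>F. mom \<kappa> (c m))"
  using assms by (intro prod.mono_neutral_right) (auto simp: mom_def)

lemma e4_prod:
  fixes d :: nat
  assumes "i < d" "j < d" "k < d" "l < d"
  shows "(\<Prod>m<d. mom \<kappa> (of_bool (i = m) + of_bool (j = m) + of_bool (k = m) + of_bool (l = m)))
     = e4 \<kappa> i j k l"
proof -
  have "(\<Prod>m<d. mom \<kappa> (of_bool (i = m) + of_bool (j = m) + of_bool (k = m) + of_bool (l = m)))
     = (\<Prod>m\<in>{i,j,k,l}. mom \<kappa> (of_bool (i = m) + of_bool (j = m) + of_bool (k = m) + of_bool (l = m)))"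
    using assms by (intro prod_mom_reduce) auto
  also have "\<dots> = e4 \<kappa> i j k l"
    by (cases "i = j"; cases "i = k"; cases "i = l"; cases "j = k"; cases "j = l"; cases "k = l")
       (auto simp: e4_def mom_def insert_commute)
  finally show ?thesis .
qed

lemma e2_prod:
  fixes d :: nat
  assumes "i < d" "j < d"
  shows "(\<Prod>m<d. mom \<kappa> (of_bool (i = m) + of_bool (j = m))) = of_bool (i = j)"
proof -
  have "(\<Prod>m<d. mom \<kappa> (of_bool (i = m) + of_bool (j = m)))
     = (\<Prod>m\<in>{i,j}. mom \<kappa> (of_bool (i = m) + of_bool (j = m)))"
    using assms by (intro prod_mom_reduce) auto
  also have "\<dots> = of_bool (i = j)"
    by (cases "i = j") (auto simp: mom_def)
  finally show ?thesis .
qed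

lemma vec_e4:
  fixes d :: nat
  assumes g: "good \<mu> \<kappa>" and "i < d" "j < d" "k < d" "l < d"
  shows "integrable (PiM {..<d} (\<lambda>_. \<mu>)) (\<lambda>x. x i * x j * x k * x l)"
    and "integral\<^sup>L (PiM {..<d} (\<lambda>_. \<mu>)) (\<lambda>x. x i * x j * x k * x l) = e4 \<kappa> i j k l"
proof -
  let ?c = "\<lambda>m. of_bool (i = m) + of_bool (j = m) + of_bool (k = m) + of_bool (l = m) :: nat"
  have c: "\<And>m. ?c m \<le> 4" by auto
  have eq: "(\<lambda>x::nat\<Rightarrow>real. x i * x j * x k * x l) = (\<lambda>x. \<Prod>m<d. x m ^ ?c m)"
    using prod_four[OF assms(2-5)] by auto
  show "integrable (PiM {..<d} (\<lambda>_. \<mu>)) (\<lambda>x. x i * x j * x k * x l)"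
    unfolding eq by (rule vec_mono(1)[OF g c])
  show "integral\<^sup>L (PiM {..<d} (\<lambda>_. \<mu>)) (\<lambda>x. x i * x j * x k * x l) = e4 \<kappa> i j k l"
    unfolding eq vec_mono(2)[OF g c] by (rule e4_prod[OF assms(2-5)])
qed

lemma vec_e2:
  fixes d :: nat
  assumes g: "good \<mu> \<kappa>" and "i < d" "j < d"
  shows "integrable (PiM {..<d} (\<lambda>_. \<mu>)) (\<lambda>x. x i * x j)"
    and "integral\<^sup>L (PiM {..<d} (\<lambda>_. \<mu>)) (\<lambda>x. x i * x j) = of_bool (i = j)"
proof -
  let ?c = "\<lambda>m. of_bool (i = m) + of_bool (j = m) :: nat"
  have c: "\<And>m. ?c m \<le> 4" by auto
  have eq: "(\<lambda>x::nat\<Rightarrow>real. x i * x j) = (\<lambda>x. \<Prod>m<d. x m ^ ?c m)"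
    using prod_two[OF assms(2-3)] by auto
  show "integrable (PiM {..<d} (\<lambda>_. \<mu>)) (\<lambda>x. x i * x j)"
    unfolding eq by (rule vec_mono(1)[OF g c])
  show "integral\<^sup>L (PiM {..<d} (\<lambda>_. \<mu>)) (\<lambda>x. x i * x j) = of_bool (i = j)"
    unfolding eq vec_mono(2)[OF g c] by (rule e2_prod[OF assms(2-3)])
qed

lemma sum_if_out[simp]: "(\<Sum>k\<in>A. if P then f k else 0) = (if P then (\<Sum>k\<in>A. f k) else (0::real))"
  by simp

lemma e4_split:
  "e4 \<kappa> i j k l * X = (if j = i then if l = k then X else 0 else 0) + (if k = i then if l = j then X else 0 else 0)
     + (if k = j then if l = i then X else 0 else 0) + (if j = i then if k = i then if l = i then \<kappa> * X else 0 else 0 else 0)"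
  by (auto simp: e4_def algebra_simps)

lemma e4_alg:
  fixes M :: "nat \<Rightarrow> nat \<Rightarrow> real"
  assumes sym: "\<And>i j. i < d \<Longrightarrow> j < d \<Longrightarrow> M i j = M j i"
  shows "(\<Sum>i<d. \<Sum>j<d. \<Sum>k<d. \<Sum>l<d. e4 \<kappa> i j k l * (M i j * M k l))
     = (\<Sum>i<d. M i i)\<^sup>2 + 2 * (\<Sum>i<d. \<Sum>j<d. (M i j)\<^sup>2) + \<kappa> * (\<Sum>i<d. (M i i)\<^sup>2)"
proof -
  have "(\<Sum>i<d. \<Sum>j<d. \<Sum>k<d. \<Sum>l<d. e4 \<kappa> i j k l * (M i j * M k l))
     = (\<Sum>i<d. \<Sum>k<d. M i i * M k k) + (\<Sum>i<d. \<Sum>j<d. M i j * M i j) + (\<Sum>i<d. \<Sum>j<d. M i j * M j i)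
       + (\<Sum>i<d. \<kappa> * (M i i * M i i))"
    by (simp add: e4_split sum.distrib)
  also have "(\<Sum>i<d. \<Sum>j<d. M i j * M j i) = (\<Sum>i<d. \<Sum>j<d. M i j * M i j)"
    by (intro sum.cong refl) (simp add: sym)
  finally have X: "(\<Sum>i<d. \<Sum>j<d. \<Sum>k<d. \<Sum>l<d. e4 \<kappa> i j k l * (M i j * M k l))
     = (\<Sum>i<d. \<Sum>k<d. M i i * M k k) + 2 * (\<Sum>i<d. \<Sum>j<d. M i j * M i j) + \<kappa> * (\<Sum>i<d. M i i * M i i)"
    by (simp add: sum_distrib_left)
  have sq: "(\<Sum>i<d. M i i)\<^sup>2 = (\<Sum>i<d. \<Sum>k<d. M i i * M k k)"
    by (simp add: power2_eq_square sum_product)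
  show ?thesis unfolding X sq by (simp add: power2_eq_square)
qed

lemma sq_expand:
  fixes f :: "nat \<Rightarrow> nat \<Rightarrow> real"
  shows "(\<Sum>i<d. \<Sum>j<d. f i j)\<^sup>2 = (\<Sum>i<d. \<Sum>j<d. \<Sum>k<d. \<Sum>l<d. f i j * f k l)"
  apply (simp only: power2_eq_square sum_distrib_right)
  apply (simp only: sum_distrib_left)
  done

lemma int_sum1:
  fixes g :: "nat \<Rightarrow> 'a \<Rightarrow> real"
  assumes "\<And>i. i < d \<Longrightarrow> integrable M (g i)"
  shows "integrable M (\<lambda>x. \<Sum>i<d. g i x)" "integral\<^sup>L M (\<lambda>x. \<Sum>i<d. g i x) = (\<Sum>i<d. integral\<^sup>L M (g i))"
proof -
  show "integrable M (\<lambda>x. \<Sum>i<d. g i x)"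
    by (rule Bochner_Integration.integrable_sum) (simp add: assms)
  show "integral\<^sup>L M (\<lambda>x. \<Sum>i<d. g i x) = (\<Sum>i<d. integral\<^sup>L M (g i))"
    by (rule Bochner_Integration.integral_sum) (simp add: assms)
qed

lemma int_sum2:
  fixes g :: "nat \<Rightarrow> nat \<Rightarrow> 'a \<Rightarrow> real"
  assumes a: "\<And>i j. i < d \<Longrightarrow> j < d \<Longrightarrow> integrable M (g i j)"
  shows "integrable M (\<lambda>x. \<Sum>i<d. \<Sum>j<d. g i j x)"
    "integral\<^sup>L M (\<lambda>x. \<Sum>i<d. \<Sum>j<d. g i j x) = (\<Sum>i<d. \<Sum>j<d. integral\<^sup>L M (g i j))"
proof -
  have *: "integrable M (\<lambda>x. \<Sum>j<d. g i j x)" if "i < d" for i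
    by (rule int_sum1(1)) (rule a[OF that])
  have **: "integral\<^sup>L M (\<lambda>x. \<Sum>j<d. g i j x) = (\<Sum>j<d. integral\<^sup>L M (g i j))" if "i < d" for i
    by (rule int_sum1(2)) (rule a[OF that])
  show "integrable M (\<lambda>x. \<Sum>i<d. \<Sum>j<d. g i j x)"
    by (rule int_sum1(1)) (rule *)
  have "integral\<^sup>L M (\<lambda>x. \<Sum>i<d. \<Sum>j<d. g i j x) = (\<Sum>i<d. integral\<^sup>L M (\<lambda>x. \<Sum>j<d. g i j x))"
    by (rule int_sum1(2)) (rule *)
  also have "\<dots> = (\<Sum>i<d. \<Sum>j<d. integral\<^sup>L M (g i j))"
    by (rule sum.cong[OF refl]) (simp add: **)
  finally show "integral\<^sup>L M (\<lambda>x. \<Sum>i<d. \<Sum>j<d. g i j x) = (\<Sum>i<d. \<Sum>j<d. integral\<^sup>L M (g i j))" .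
qed

lemma int_sum4:
  fixes g :: "nat \<Rightarrow> nat \<Rightarrow> nat \<Rightarrow> nat \<Rightarrow> 'a \<Rightarrow> real"
  assumes a: "\<And>i j k l. i < d \<Longrightarrow> j < d \<Longrightarrow> k < d \<Longrightarrow> l < d \<Longrightarrow> integrable M (g i j k l)"
  shows "integrable M (\<lambda>x. \<Sum>i<d. \<Sum>j<d. \<Sum>k<d. \<Sum>l<d. g i j k l x)"
    "integral\<^sup>L M (\<lambda>x. \<Sum>i<d. \<Sum>j<d. \<Sum>k<d. \<Sum>l<d. g i j k l x) =
       (\<Sum>i<d. \<Sum>j<d. \<Sum>k<d. \<Sum>l<d. integral\<^sup>L M (g i j k l))"
proof -
  have *: "integrable M (\<lambda>x. \<Sum>k<d. \<Sum>l<d. g i j k l x)" if "i < d" "j < d" for i j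
    by (rule int_sum2(1)) (rule a[OF that])
  have **: "integral\<^sup>L M (\<lambda>x. \<Sum>k<d. \<Sum>l<d. g i j k l x) = (\<Sum>k<d. \<Sum>l<d. integral\<^sup>L M (g i j k l))"
    if "i < d" "j < d" for i j
    by (rule int_sum2(2)) (rule a[OF that])
  show "integrable M (\<lambda>x. \<Sum>i<d. \<Sum>j<d. \<Sum>k<d. \<Sum>l<d. g i j k l x)"
    by (rule int_sum2(1)) (rule *)
  have "integral\<^sup>L M (\<lambda>x. \<Sum>i<d. \<Sum>j<d. \<Sum>k<d. \<Sum>l<d. g i j k l x) =
      (\<Sum>i<d. \<Sum>j<d. integral\<^sup>L M (\<lambda>x. \<Sum>k<d. \<Sum>l<d. g i j k l x))"
    by (rule int_sum2(2)) (rule *)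
  also have "\<dots> = (\<Sum>i<d. \<Sum>j<d. \<Sum>k<d. \<Sum>l<d. integral\<^sup>L M (g i j k l))"
    by (intro sum.cong refl) (simp add: **)
  finally show "integral\<^sup>L M (\<lambda>x. \<Sum>i<d. \<Sum>j<d. \<Sum>k<d. \<Sum>l<d. g i j k l x) =
       (\<Sum>i<d. \<Sum>j<d. \<Sum>k<d. \<Sum>l<d. integral\<^sup>L M (g i j k l))" .
qed
lemma qf:
  fixes d :: nat and M :: "nat \<Rightarrow> nat \<Rightarrow> real"
  assumes g: "good \<mu> \<kappa>" and sym: "\<And>i j. i < d \<Longrightarrow> j < d \<Longrightarrow> M i j = M j i"
  shows "integrable (PiM {..<d} (\<lambda>_. \<mu>)) (\<lambda>x. (\<Sum>i<d. \<Sum>j<d. x i * x j * M i j)\<^sup>2)"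
    and "integral\<^sup>L (PiM {..<d} (\<lambda>_. \<mu>)) (\<lambda>x. (\<Sum>i<d. \<Sum>j<d. x i * x j * M i j)\<^sup>2)
          = (\<Sum>i<d. M i i)\<^sup>2 + 2 * (\<Sum>i<d. \<Sum>j<d. (M i j)\<^sup>2) + \<kappa> * (\<Sum>i<d. (M i i)\<^sup>2)"
    and "integrable (PiM {..<d} (\<lambda>_. \<mu>)) (\<lambda>x. \<Sum>i<d. \<Sum>j<d. x i * x j * M i j)"
    and "integral\<^sup>L (PiM {..<d} (\<lambda>_. \<mu>)) (\<lambda>x. \<Sum>i<d. \<Sum>j<d. x i * x j * M i j) = (\<Sum>i<d. M i i)"
proof -
  let ?D = "PiM {..<d} (\<lambda>_. \<mu>)"
  have pt: "(\<lambda>x::nat\<Rightarrow>real. (\<Sum>i<d. \<Sum>j<d. x i * x j * M i j)\<^sup>2) =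
     (\<lambda>x. \<Sum>i<d. \<Sum>j<d. \<Sum>k<d. \<Sum>l<d. (x i * x j * x k * x l) * (M i j * M k l))"
    unfolding sq_expand by (intro ext sum.cong refl) (simp add: mult_ac)
  have i4: "\<And>i j k l. i < d \<Longrightarrow> j < d \<Longrightarrow> k < d \<Longrightarrow> l < d \<Longrightarrow>
      integrable ?D (\<lambda>x. x i * x j * x k * x l)"
    using vec_e4(1)[OF g] by blast
  have v4: "\<And>i j k l. i < d \<Longrightarrow> j < d \<Longrightarrow> k < d \<Longrightarrow> l < d \<Longrightarrow>
      integral\<^sup>L ?D (\<lambda>x. x i * x j * x k * x l) = e4 \<kappa> i j k l"
    using vec_e4(2)[OF g] by blast
  have i2: "\<And>i j. i < d \<Longrightarrow> j < d \<Longrightarrow> integrable ?D (\<lambda>x. x i * x j)"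
    using vec_e2(1)[OF g] by blast
  have v2: "\<And>i j. i < d \<Longrightarrow> j < d \<Longrightarrow> integral\<^sup>L ?D (\<lambda>x. x i * x j) = of_bool (i = j)"
    using vec_e2(2)[OF g] by blast
  show "integrable ?D (\<lambda>x. (\<Sum>i<d. \<Sum>j<d. x i * x j * M i j)\<^sup>2)"
    unfolding pt
    by (rule int_sum4(1)[where g="\<lambda>i j k l x. x i * x j * x k * x l * (M i j * M k l)"]) (simp add: i4)
  have "integral\<^sup>L ?D (\<lambda>x. (\<Sum>i<d. \<Sum>j<d. x i * x j * M i j)\<^sup>2)
      = (\<Sum>i<d. \<Sum>j<d. \<Sum>k<d. \<Sum>l<d. e4 \<kappa> i j k l * (M i j * M k l))"
  proof -
    have "integral\<^sup>L ?D (\<lambda>x. \<Sum>i<d. \<Sum>j<d. \<Sum>k<d. \<Sum>l<d. x i * x j * x k * x l * (M i j * M k l))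
      = (\<Sum>i<d. \<Sum>j<d. \<Sum>k<d. \<Sum>l<d. integral\<^sup>L ?D (\<lambda>x. x i * x j * x k * x l * (M i j * M k l)))"
      by (rule int_sum4(2)[where g="\<lambda>i j k l x. x i * x j * x k * x l * (M i j * M k l)"])
         (simp add: i4)
    also have "\<dots> = (\<Sum>i<d. \<Sum>j<d. \<Sum>k<d. \<Sum>l<d. e4 \<kappa> i j k l * (M i j * M k l))"
      by (intro sum.cong refl) (simp add: v4)
    finally show ?thesis unfolding pt .
  qed
  also have "\<dots> = (\<Sum>i<d. M i i)\<^sup>2 + 2 * (\<Sum>i<d. \<Sum>j<d. (M i j)\<^sup>2) + \<kappa> * (\<Sum>i<d. (M i i)\<^sup>2)"
    by (rule e4_alg[OF sym])
  finally show "integral\<^sup>L ?D (\<lambda>x. (\<Sum>i<d. \<Sum>j<d. x i * x j * M i j)\<^sup>2)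
          = (\<Sum>i<d. M i i)\<^sup>2 + 2 * (\<Sum>i<d. \<Sum>j<d. (M i j)\<^sup>2) + \<kappa> * (\<Sum>i<d. (M i i)\<^sup>2)" .
  show "integrable ?D (\<lambda>x. \<Sum>i<d. \<Sum>j<d. x i * x j * M i j)"
    by (rule int_sum2(1)[where g="\<lambda>i j x. x i * x j * M i j"]) (simp add: i2)
  have "integral\<^sup>L ?D (\<lambda>x. \<Sum>i<d. \<Sum>j<d. x i * x j * M i j) = (\<Sum>i<d. \<Sum>j<d. of_bool (i = j) * M i j)"
    by (subst int_sum2(2)[where g="\<lambda>i j x. x i * x j * M i j"]) (simp_all add: i2 v2)
  also have "\<dots> = (\<Sum>i<d. M i i)"
  proof -
    have "\<And>i j. of_bool (i = j) * M i j = (if j = i then M i j else 0)" by auto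
    then show ?thesis by (simp add: sum.delta)
  qed
  finally show "integral\<^sup>L ?D (\<lambda>x. \<Sum>i<d. \<Sum>j<d. x i * x j * M i j) = (\<Sum>i<d. M i i)" .
qed

lemma pair_int:
  fixes f :: "'a \<Rightarrow> real" and g :: "'b \<Rightarrow> real"
  assumes P1: "prob_space M1" and P2: "prob_space M2" and f: "integrable M1 f" and g: "integrable M2 g"
  shows "integrable (M1 \<Otimes>\<^sub>M M2) (\<lambda>z. f (fst z) * g (snd z))"
    and "integral\<^sup>L (M1 \<Otimes>\<^sub>M M2) (\<lambda>z. f (fst z) * g (snd z)) = integral\<^sup>L M1 f * integral\<^sup>L M2 g"
proof -
  interpret M1: prob_space M1 by fact
  interpret M2: prob_space M2 by fact
  interpret pair_prob_space M1 M2 by unfold_locales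
  have [measurable]: "f \<in> borel_measurable M1" "g \<in> borel_measurable M2"
    using f g by auto
  show int: "integrable (M1 \<Otimes>\<^sub>M M2) (\<lambda>z. f (fst z) * g (snd z))"
  proof (rule Fubini_integrable)
    show "(\<lambda>z. f (fst z) * g (snd z)) \<in> borel_measurable (M1 \<Otimes>\<^sub>M M2)" by measurable
    have "integrable M1 (\<lambda>x. norm (f x) * (\<integral>y. norm (g y) \<partial>M2))"
      using f by (intro integrable_mult_left) auto
    then show "integrable M1 (\<lambda>x. \<integral>y. norm (f (fst (x, y)) * g (snd (x, y))) \<partial>M2)"
      by (simp add: abs_mult)
    show "AE x in M1. integrable M2 (\<lambda>y. f (fst (x, y)) * g (snd (x, y)))"
      using g by simp
  qed
  have "integral\<^sup>L (M1 \<Otimes>\<^sub>M M2) (\<lambda>z. f (fst z) * g (snd z)) = (\<integral>x. (\<integral>y. f x * g y \<partial>M2) \<partial>M1)"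
    using integral_fst'[OF int] by simp
  also have "\<dots> = (\<integral>x. f x * integral\<^sup>L M2 g \<partial>M1)" by simp
  also have "\<dots> = integral\<^sup>L M1 f * integral\<^sup>L M2 g" by simp
  finally show "integral\<^sup>L (M1 \<Otimes>\<^sub>M M2) (\<lambda>z. f (fst z) * g (snd z)) = integral\<^sup>L M1 f * integral\<^sup>L M2 g" .
qed

lemma sum_pair: "(\<Sum>p\<in>{..<d}\<times>{..<d}. f p) = (\<Sum>i<(d::nat). \<Sum>a<d. f (i,a))"
  by (simp add: sum.cartesian_product)

definition FF :: "nat \<Rightarrow> bmat \<Rightarrow> (nat \<Rightarrow> real) \<Rightarrow> (nat \<Rightarrow> real) \<Rightarrow> real" where
  "FF d B u v = (\<Sum>i<d. \<Sum>a<d. \<Sum>j<d. \<Sum>b<d. u i * v a * B (i,a) (j,b) * u j * v b)"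

lemma qform_FF: "qform d B (kron u v) = FF d B u v"
  unfolding qform_def FF_def kron_def sum_pair by (simp add: sum_distrib_left mult_ac)

lemma FF_ptrans1: "FF d (ptrans1 B) u v = FF d B u v"
proof -
  have "FF d (ptrans1 B) u v = (\<Sum>i<d. \<Sum>a<d. \<Sum>j<d. \<Sum>b<d. u i * v a * B (j,a) (i,b) * u j * v b)"
    unfolding FF_def ptrans1_def by simp
  also have "\<dots> = (\<Sum>i<d. \<Sum>j<d. \<Sum>a<d. \<Sum>b<d. u i * v a * B (j,a) (i,b) * u j * v b)"
    by (rule sum.cong[OF refl], rule sum.swap)
  also have "\<dots> = (\<Sum>j<d. \<Sum>i<d. \<Sum>a<d. \<Sum>b<d. u i * v a * B (j,a) (i,b) * u j * v b)"
    by (rule sum.swap)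
  also have "\<dots> = (\<Sum>j<d. \<Sum>a<d. \<Sum>i<d. \<Sum>b<d. u i * v a * B (j,a) (i,b) * u j * v b)"
    by (rule sum.cong[OF refl], rule sum.swap)
  also have "\<dots> = FF d B u v"
    unfolding FF_def by (intro sum.cong refl) (simp add: mult_ac)
  finally show ?thesis .
qed

lemma FF_ptrans2: "FF d (ptrans2 B) u v = FF d B u v"
proof -
  have "FF d (ptrans2 B) u v = (\<Sum>i<d. \<Sum>a<d. \<Sum>j<d. \<Sum>b<d. u i * v a * B (i,b) (j,a) * u j * v b)"
    unfolding FF_def ptrans2_def by simp
  also have "\<dots> = (\<Sum>i<d. \<Sum>j<d. \<Sum>a<d. \<Sum>b<d. u i * v a * B (i,b) (j,a) * u j * v b)"
    by (rule sum.cong[OF refl], rule sum.swap)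
  also have "\<dots> = (\<Sum>i<d. \<Sum>j<d. \<Sum>b<d. \<Sum>a<d. u i * v a * B (i,b) (j,a) * u j * v b)"
    by (rule sum.cong[OF refl], rule sum.cong[OF refl], rule sum.swap)
  also have "\<dots> = (\<Sum>i<d. \<Sum>b<d. \<Sum>j<d. \<Sum>a<d. u i * v a * B (i,b) (j,a) * u j * v b)"
    by (rule sum.cong[OF refl], rule sum.swap)
  also have "\<dots> = FF d B u v"
    unfolding FF_def by (intro sum.cong refl) (simp add: mult_ac)
  finally show ?thesis .
qed

lemma FF_btrans: "FF d (btrans B) u v = FF d B u v"
proof -
  have "FF d (btrans B) u v = FF d (ptrans1 (ptrans2 B)) u v"
    unfolding btrans_def ptrans1_def ptrans2_def FF_def by simp
  then show ?thesis by (simp add: FF_ptrans1 FF_ptrans2)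
qed

lemma FF_lin: "FF d (\<lambda>p q. (B1 p q + B2 p q + B3 p q + B4 p q) / 4) u v
   = (FF d B1 u v + FF d B2 u v + FF d B3 u v + FF d B4 u v) / 4"
proof -
  have pw: "\<And>x y z w. x * y * ((z1 + z2 + z3 + z4) / 4) * z * w =
      (x * y * z1 * z * w + x * y * z2 * z * w + x * y * z3 * z * w + x * y * z4 * z * w) / (4::real)"
    for z1 z2 z3 z4 by (simp add: algebra_simps)
  show ?thesis
    unfolding FF_def pw
    by (simp only: sum.distrib sum_divide_distrib[symmetric])
qed

lemma FF_sym_bar: "FF d (sym_bar B) u v = FF d B u v"
  unfolding sym_bar_def FF_lin by (simp add: FF_ptrans1 FF_ptrans2 FF_btrans)

definition Mv :: "nat \<Rightarrow> bmat \<Rightarrow> (nat \<Rightarrow> real) \<Rightarrow> nat \<Rightarrow> nat \<Rightarrow> real" where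
  "Mv d S v i j = (\<Sum>a<d. \<Sum>b<d. v a * v b * S (i,a) (j,b))"

lemma FF_Mv: "FF d B u v = (\<Sum>i<d. \<Sum>j<d. u i * u j * Mv d B v i j)"
proof -
  have "FF d B u v = (\<Sum>i<d. \<Sum>j<d. \<Sum>a<d. \<Sum>b<d. u i * v a * B (i,a) (j,b) * u j * v b)"
    unfolding FF_def by (rule sum.cong[OF refl], rule sum.swap)
  also have "\<dots> = (\<Sum>i<d. \<Sum>j<d. u i * u j * Mv d B v i j)"
    unfolding Mv_def by (simp add: sum_distrib_left mult_ac)
  finally show ?thesis .
qed

lemma Q_repr: "qform d A (kron u v) = (\<Sum>i<d. \<Sum>j<d. u i * u j * Mv d (sym_bar A) v i j)"
  by (simp add: qform_FF FF_sym_bar FF_Mv[symmetric])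

lemma sym_bar_sym1: "sym_bar A (i,a) (j,b) = sym_bar A (j,a) (i,b)"
  unfolding sym_bar_def ptrans1_def ptrans2_def btrans_def by simp
lemma sym_bar_sym2: "sym_bar A (i,a) (j,b) = sym_bar A (i,b) (j,a)"
  unfolding sym_bar_def ptrans1_def ptrans2_def btrans_def by simp

lemma Mv_sym: "Mv d (sym_bar A) v i j = Mv d (sym_bar A) v j i"
  unfolding Mv_def
  apply (intro sum.cong refl)
  apply (subst sym_bar_sym1)
  apply (rule refl)
  done

lemma prod_expand:
  fixes f g :: "nat \<Rightarrow> nat \<Rightarrow> real"
  shows "(\<Sum>i<d. \<Sum>j<d. f i j) * (\<Sum>k<d. \<Sum>l<d. g k l) = (\<Sum>i<d. \<Sum>j<d. \<Sum>k<d. \<Sum>l<d. f i j * g k l)"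
  apply (simp only: sum_distrib_right)
  apply (simp only: sum_distrib_left)
  done

lemma vec_prodform:
  fixes d :: nat
  assumes g: "good \<mu> \<kappa>"
  shows "integrable (PiM {..<d} (\<lambda>_. \<mu>))
     (\<lambda>x. (\<Sum>a<d. \<Sum>b<d. x a * x b * P a b) * (\<Sum>c<d. \<Sum>e<d. x c * x e * R c e))"
proof -
  have eq: "(\<lambda>x::nat\<Rightarrow>real. (\<Sum>a<d. \<Sum>b<d. x a * x b * P a b) * (\<Sum>c<d. \<Sum>e<d. x c * x e * R c e)) =
     (\<lambda>x. \<Sum>a<d. \<Sum>b<d. \<Sum>c<d. \<Sum>e<d. (x a * x b * x c * x e) * (P a b * R c e))"
    unfolding prod_expand by (intro ext sum.cong refl) (simp add: mult_ac)
  show ?thesis unfolding eq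
    by (rule int_sum4(1)[where g="\<lambda>a b c e x. (x a * x b * x c * x e) * (P a b * R c e)"])
       (simp add: vec_e4(1)[OF g])
qed

lemma Mv_qf: "Mv d S v i j = (\<Sum>a<d. \<Sum>b<d. v a * v b * (\<lambda>a b. S (i,a) (j,b)) a b)"
  unfolding Mv_def by simp

lemma trM: "(\<Sum>i<d. Mv d S v i i) = (\<Sum>a<d. \<Sum>b<d. v a * v b * ptr1 d S a b)"
proof -
  have "(\<Sum>i<d. Mv d S v i i) = (\<Sum>a<d. \<Sum>b<d. \<Sum>i<d. v a * v b * S (i,a) (i,b))"
  proof -
    have "(\<Sum>i<d. Mv d S v i i) = (\<Sum>i<d. \<Sum>a<d. \<Sum>b<d. v a * v b * S (i,a) (i,b))"
      unfolding Mv_def ..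
    also have "\<dots> = (\<Sum>a<d. \<Sum>i<d. \<Sum>b<d. v a * v b * S (i,a) (i,b))"
      by (rule sum.swap)
    also have "\<dots> = (\<Sum>a<d. \<Sum>b<d. \<Sum>i<d. v a * v b * S (i,a) (i,b))"
      by (rule sum.cong[OF refl], rule sum.swap)
    finally show ?thesis .
  qed
  then show ?thesis unfolding ptr1_def by (simp add: sum_distrib_left)
qed


lemma good_PiM: "good \<mu> \<kappa> \<Longrightarrow> prob_space (PiM I (\<lambda>_. \<mu>))"
  by (intro prob_space_PiM good_prob)

lemma sqN:
  fixes d :: nat
  assumes g2: "good \<mu>2 \<kappa>2"
  shows "integrable (PiM {..<d} (\<lambda>_. \<mu>2)) (\<lambda>v. (\<Sum>i<d. Mv d (sym_bar A) v i i)\<^sup>2)"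
    and "integral\<^sup>L (PiM {..<d} (\<lambda>_. \<mu>2)) (\<lambda>v. (\<Sum>i<d. Mv d (sym_bar A) v i i)\<^sup>2) =
      (\<Sum>a<d. ptr1 d (sym_bar A) a a)\<^sup>2 + 2 * (\<Sum>a<d. \<Sum>b<d. (ptr1 d (sym_bar A) a b)\<^sup>2)
       + \<kappa>2 * (\<Sum>a<d. (ptr1 d (sym_bar A) a a)\<^sup>2)"
proof -
  have sym: "\<And>a b. a < d \<Longrightarrow> b < d \<Longrightarrow> ptr1 d (sym_bar A) a b = ptr1 d (sym_bar A) b a"
    unfolding ptr1_def by (metis sym_bar_sym2)
  show "integrable (PiM {..<d} (\<lambda>_. \<mu>2)) (\<lambda>v. (\<Sum>i<d. Mv d (sym_bar A) v i i)\<^sup>2)"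
    unfolding trM by (rule qf(1)[OF g2 sym])
  show "integral\<^sup>L (PiM {..<d} (\<lambda>_. \<mu>2)) (\<lambda>v. (\<Sum>i<d. Mv d (sym_bar A) v i i)\<^sup>2) =
      (\<Sum>a<d. ptr1 d (sym_bar A) a a)\<^sup>2 + 2 * (\<Sum>a<d. \<Sum>b<d. (ptr1 d (sym_bar A) a b)\<^sup>2)
       + \<kappa>2 * (\<Sum>a<d. (ptr1 d (sym_bar A) a a)\<^sup>2)"
    unfolding trM by (rule qf(2)[OF g2 sym])
qed

lemma sqM:
  fixes d :: nat
  assumes g2: "good \<mu>2 \<kappa>2"
  shows "integrable (PiM {..<d} (\<lambda>_. \<mu>2)) (\<lambda>v. (Mv d (sym_bar A) v i j)\<^sup>2)"
    and "integral\<^sup>L (PiM {..<d} (\<lambda>_. \<mu>2)) (\<lambda>v. (Mv d (sym_bar A) v i j)\<^sup>2) =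
      (\<Sum>a<d. sym_bar A (i,a) (j,a))\<^sup>2 + 2 * (\<Sum>a<d. \<Sum>b<d. (sym_bar A (i,a) (j,b))\<^sup>2)
       + \<kappa>2 * (\<Sum>a<d. (sym_bar A (i,a) (j,a))\<^sup>2)"
    and "integrable (PiM {..<d} (\<lambda>_. \<mu>2)) (\<lambda>v. Mv d (sym_bar A) v i j)"
    and "integral\<^sup>L (PiM {..<d} (\<lambda>_. \<mu>2)) (\<lambda>v. Mv d (sym_bar A) v i j) = (\<Sum>a<d. sym_bar A (i,a) (j,a))"
proof -
  have sym: "\<And>a b. a < d \<Longrightarrow> b < d \<Longrightarrow> sym_bar A (i,a) (j,b) = sym_bar A (i,b) (j,a)"
    by (rule sym_bar_sym2)
  show "integrable (PiM {..<d} (\<lambda>_. \<mu>2)) (\<lambda>v. (Mv d (sym_bar A) v i j)\<^sup>2)"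
    unfolding Mv_def by (rule qf(1)[OF g2, where M="\<lambda>a b. sym_bar A (i,a) (j,b)", OF sym])
  show "integral\<^sup>L (PiM {..<d} (\<lambda>_. \<mu>2)) (\<lambda>v. (Mv d (sym_bar A) v i j)\<^sup>2) =
      (\<Sum>a<d. sym_bar A (i,a) (j,a))\<^sup>2 + 2 * (\<Sum>a<d. \<Sum>b<d. (sym_bar A (i,a) (j,b))\<^sup>2)
       + \<kappa>2 * (\<Sum>a<d. (sym_bar A (i,a) (j,a))\<^sup>2)"
    unfolding Mv_def by (rule qf(2)[OF g2, where M="\<lambda>a b. sym_bar A (i,a) (j,b)", OF sym])
  show "integrable (PiM {..<d} (\<lambda>_. \<mu>2)) (\<lambda>v. Mv d (sym_bar A) v i j)"
    unfolding Mv_def by (rule qf(3)[OF g2, where M="\<lambda>a b. sym_bar A (i,a) (j,b)", OF sym])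
  show "integral\<^sup>L (PiM {..<d} (\<lambda>_. \<mu>2)) (\<lambda>v. Mv d (sym_bar A) v i j) = (\<Sum>a<d. sym_bar A (i,a) (j,a))"
    unfolding Mv_def by (rule qf(4)[OF g2, where M="\<lambda>a b. sym_bar A (i,a) (j,b)", OF sym])
qed


lemma delta_sum:
  fixes f :: "nat \<Rightarrow> real"
  assumes "i < d"
  shows "(\<Sum>j<d. of_bool (i = j) * f j) = f i"
proof -
  have "(\<Sum>j<d. of_bool (i = j) * f j) = (\<Sum>j<d. if j = i then f j else 0)"
    by (rule sum.cong) auto
  also have "\<dots> = f i" using assms by (simp add: sum.delta)
  finally show ?thesis .
qed

lemma pair_moments:
  fixes d :: nat and A :: bmat
  assumes g1: "good \<mu>1 \<kappa>1" and g2: "good \<mu>2 \<kappa>2"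
  defines "P \<equiv> PiM {..<d} (\<lambda>_. \<mu>1) \<Otimes>\<^sub>M PiM {..<d} (\<lambda>_. \<mu>2)"
  defines "Q \<equiv> \<lambda>z. qform d A (kron (fst z) (snd z))"
  shows "integrable P Q"
    and "integral\<^sup>L P Q = (\<Sum>i<d. \<Sum>a<d. sym_bar A (i,a) (i,a))"
    and "integrable P (\<lambda>z. (Q z)\<^sup>2)"
    and "integral\<^sup>L P (\<lambda>z. (Q z)\<^sup>2) =
       ((\<Sum>a<d. ptr1 d (sym_bar A) a a)\<^sup>2 + 2 * (\<Sum>a<d. \<Sum>b<d. (ptr1 d (sym_bar A) a b)\<^sup>2)
         + \<kappa>2 * (\<Sum>a<d. (ptr1 d (sym_bar A) a a)\<^sup>2))
     + 2 * (\<Sum>i<d. \<Sum>j<d. (\<Sum>a<d. sym_bar A (i,a) (j,a))\<^sup>2 + 2 * (\<Sum>a<d. \<Sum>b<d. (sym_bar A (i,a) (j,b))\<^sup>2)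
       + \<kappa>2 * (\<Sum>a<d. (sym_bar A (i,a) (j,a))\<^sup>2))
     + \<kappa>1 * (\<Sum>i<d. (\<Sum>a<d. sym_bar A (i,a) (i,a))\<^sup>2 + 2 * (\<Sum>a<d. \<Sum>b<d. (sym_bar A (i,a) (i,b))\<^sup>2)
       + \<kappa>2 * (\<Sum>a<d. (sym_bar A (i,a) (i,a))\<^sup>2))"
proof -
  define S where "S = sym_bar A"
  define D1 where "D1 = PiM {..<d} (\<lambda>_. \<mu>1)"
  define D2 where "D2 = PiM {..<d} (\<lambda>_. \<mu>2)"
  have p1: "prob_space D1" unfolding D1_def by (rule good_PiM[OF g1])
  have p2: "prob_space D2" unfolding D2_def by (rule good_PiM[OF g2])
  have Pd: "P = D1 \<Otimes>\<^sub>M D2" unfolding P_def D1_def D2_def ..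
  have Qe: "Q = (\<lambda>z. \<Sum>i<d. \<Sum>j<d. (fst z i * fst z j) * Mv d S (snd z) i j)"
    unfolding Q_def S_def by (intro ext) (rule Q_repr)
  have Q2e: "(\<lambda>z. (Q z)\<^sup>2) = (\<lambda>z. \<Sum>i<d. \<Sum>j<d. \<Sum>k<d. \<Sum>l<d.
      (fst z i * fst z j * fst z k * fst z l) * (Mv d S (snd z) i j * Mv d S (snd z) k l))"
    unfolding Qe sq_expand by (intro ext sum.cong refl) (simp add: mult_ac)
  have prodint: "integrable D2 (\<lambda>v. Mv d S v i j * Mv d S v k l)" for i j k l
    unfolding Mv_def D2_def by (rule vec_prodform[OF g2])
  have t4i: "integrable P (\<lambda>z. (fst z i * fst z j * fst z k * fst z l) * (Mv d S (snd z) i j * Mv d S (snd z) k l))"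
    and t4v: "integral\<^sup>L P (\<lambda>z. (fst z i * fst z j * fst z k * fst z l) * (Mv d S (snd z) i j * Mv d S (snd z) k l))
      = e4 \<kappa>1 i j k l * integral\<^sup>L D2 (\<lambda>v. Mv d S v i j * Mv d S v k l)"
    if "i < d" "j < d" "k < d" "l < d" for i j k l
  proof -
    have f: "integrable D1 (\<lambda>x. x i * x j * x k * x l)"
      unfolding D1_def by (rule vec_e4(1)[OF g1 that])
    have fv: "integral\<^sup>L D1 (\<lambda>x. x i * x j * x k * x l) = e4 \<kappa>1 i j k l"
      unfolding D1_def by (rule vec_e4(2)[OF g1 that])
    show "integrable P (\<lambda>z. (fst z i * fst z j * fst z k * fst z l) * (Mv d S (snd z) i j * Mv d S (snd z) k l))"
      using pair_int(1)[OF p1 p2 f prodint] unfolding Pd by simp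
    show "integral\<^sup>L P (\<lambda>z. (fst z i * fst z j * fst z k * fst z l) * (Mv d S (snd z) i j * Mv d S (snd z) k l))
      = e4 \<kappa>1 i j k l * integral\<^sup>L D2 (\<lambda>v. Mv d S v i j * Mv d S v k l)"
      using pair_int(2)[OF p1 p2 f prodint] unfolding Pd fv by simp
  qed
  show "integrable P (\<lambda>z. (Q z)\<^sup>2)"
    unfolding Q2e by (rule int_sum4(1)) (rule t4i)
  have "integral\<^sup>L P (\<lambda>z. (Q z)\<^sup>2) =
      (\<Sum>i<d. \<Sum>j<d. \<Sum>k<d. \<Sum>l<d. e4 \<kappa>1 i j k l * integral\<^sup>L D2 (\<lambda>v. Mv d S v i j * Mv d S v k l))"
    unfolding Q2e by (subst int_sum4(2), rule t4i, simp_all) (intro sum.cong refl, simp add: t4v)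
  also have "\<dots> = integral\<^sup>L D2 (\<lambda>v. \<Sum>i<d. \<Sum>j<d. \<Sum>k<d. \<Sum>l<d. e4 \<kappa>1 i j k l * (Mv d S v i j * Mv d S v k l))"
    by (subst int_sum4(2)) (simp_all add: prodint)
  also have "\<dots> = integral\<^sup>L D2 (\<lambda>v. (\<Sum>i<d. Mv d S v i i)\<^sup>2 + 2 * (\<Sum>i<d. \<Sum>j<d. (Mv d S v i j)\<^sup>2)
        + \<kappa>1 * (\<Sum>i<d. (Mv d S v i i)\<^sup>2))"
    unfolding S_def by (intro Bochner_Integration.integral_cong refl e4_alg Mv_sym)
  also have "\<dots> = integral\<^sup>L D2 (\<lambda>v. (\<Sum>i<d. Mv d S v i i)\<^sup>2) + 2 * (\<Sum>i<d. \<Sum>j<d. integral\<^sup>L D2 (\<lambda>v. (Mv d S v i j)\<^sup>2))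
        + \<kappa>1 * (\<Sum>i<d. integral\<^sup>L D2 (\<lambda>v. (Mv d S v i i)\<^sup>2))"
  proof -
    have i1: "integrable D2 (\<lambda>v. (\<Sum>i<d. Mv d S v i i)\<^sup>2)"
      unfolding D2_def S_def by (rule sqN(1)[OF g2])
    have i2: "integrable D2 (\<lambda>v. (Mv d S v i j)\<^sup>2)" for i j
      unfolding D2_def S_def by (rule sqM(1)[OF g2])
    have i3: "integrable D2 (\<lambda>v. 2 * (\<Sum>i<d. \<Sum>j<d. (Mv d S v i j)\<^sup>2))"
      by (intro integrable_mult_right int_sum2(1) i2)
    have i4: "integrable D2 (\<lambda>v. \<kappa>1 * (\<Sum>i<d. (Mv d S v i i)\<^sup>2))"
      by (intro integrable_mult_right int_sum1(1) i2)
    show ?thesis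
      using i1 i3 i4
      by (simp add: int_sum2(2)[OF i2] int_sum1(2)[OF i2])
  qed
  also have "\<dots> = ((\<Sum>a<d. ptr1 d (sym_bar A) a a)\<^sup>2 + 2 * (\<Sum>a<d. \<Sum>b<d. (ptr1 d (sym_bar A) a b)\<^sup>2)
         + \<kappa>2 * (\<Sum>a<d. (ptr1 d (sym_bar A) a a)\<^sup>2))
     + 2 * (\<Sum>i<d. \<Sum>j<d. (\<Sum>a<d. sym_bar A (i,a) (j,a))\<^sup>2 + 2 * (\<Sum>a<d. \<Sum>b<d. (sym_bar A (i,a) (j,b))\<^sup>2)
       + \<kappa>2 * (\<Sum>a<d. (sym_bar A (i,a) (j,a))\<^sup>2))
     + \<kappa>1 * (\<Sum>i<d. (\<Sum>a<d. sym_bar A (i,a) (i,a))\<^sup>2 + 2 * (\<Sum>a<d. \<Sum>b<d. (sym_bar A (i,a) (i,b))\<^sup>2)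
       + \<kappa>2 * (\<Sum>a<d. (sym_bar A (i,a) (i,a))\<^sup>2))"
    unfolding D2_def S_def sqN(2)[OF g2] sqM(2)[OF g2] ..
  finally show "integral\<^sup>L P (\<lambda>z. (Q z)\<^sup>2) =
       ((\<Sum>a<d. ptr1 d (sym_bar A) a a)\<^sup>2 + 2 * (\<Sum>a<d. \<Sum>b<d. (ptr1 d (sym_bar A) a b)\<^sup>2)
         + \<kappa>2 * (\<Sum>a<d. (ptr1 d (sym_bar A) a a)\<^sup>2))
     + 2 * (\<Sum>i<d. \<Sum>j<d. (\<Sum>a<d. sym_bar A (i,a) (j,a))\<^sup>2 + 2 * (\<Sum>a<d. \<Sum>b<d. (sym_bar A (i,a) (j,b))\<^sup>2)
       + \<kappa>2 * (\<Sum>a<d. (sym_bar A (i,a) (j,a))\<^sup>2))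
     + \<kappa>1 * (\<Sum>i<d. (\<Sum>a<d. sym_bar A (i,a) (i,a))\<^sup>2 + 2 * (\<Sum>a<d. \<Sum>b<d. (sym_bar A (i,a) (i,b))\<^sup>2)
       + \<kappa>2 * (\<Sum>a<d. (sym_bar A (i,a) (i,a))\<^sup>2))" .
  have t2i: "integrable P (\<lambda>z. (fst z i * fst z j) * Mv d S (snd z) i j)"
    and t2v: "integral\<^sup>L P (\<lambda>z. (fst z i * fst z j) * Mv d S (snd z) i j)
      = of_bool (i = j) * (\<Sum>a<d. S (i,a) (j,a))"
    if "i < d" "j < d" for i j
  proof -
    have f: "integrable D1 (\<lambda>x. x i * x j)"
      unfolding D1_def by (rule vec_e2(1)[OF g1 that])
    have fv: "integral\<^sup>L D1 (\<lambda>x. x i * x j) = of_bool (i = j)"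
      unfolding D1_def by (rule vec_e2(2)[OF g1 that])
    have g: "integrable D2 (\<lambda>v. Mv d S v i j)"
      unfolding D2_def S_def by (rule sqM(3)[OF g2])
    have gv: "integral\<^sup>L D2 (\<lambda>v. Mv d S v i j) = (\<Sum>a<d. S (i,a) (j,a))"
      unfolding D2_def S_def by (rule sqM(4)[OF g2])
    show "integrable P (\<lambda>z. (fst z i * fst z j) * Mv d S (snd z) i j)"
      using pair_int(1)[OF p1 p2 f g] unfolding Pd by simp
    show "integral\<^sup>L P (\<lambda>z. (fst z i * fst z j) * Mv d S (snd z) i j)
      = of_bool (i = j) * (\<Sum>a<d. S (i,a) (j,a))"
      using pair_int(2)[OF p1 p2 f g] unfolding Pd fv gv by simp
  qed
  show "integrable P Q"
    unfolding Qe by (rule int_sum2(1)) (rule t2i)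
  have "integral\<^sup>L P Q = (\<Sum>i<d. \<Sum>j<d. of_bool (i = j) * (\<Sum>a<d. S (i,a) (j,a)))"
    unfolding Qe
    apply (rule trans[OF int_sum2(2)[where g="\<lambda>i j z. fst z i * fst z j * Mv d S (snd z) i j" and M=P and d=d, OF t2i]], assumption+)
    apply (rule sum.cong[OF refl], rule sum.cong[OF refl])
    apply (rule t2v; simp)
    done
  also have "\<dots> = (\<Sum>i<d. \<Sum>a<d. S (i,a) (i,a))"
    by (rule sum.cong[OF refl]) (simp add: delta_sum)
  finally show "integral\<^sup>L P Q = (\<Sum>i<d. \<Sum>a<d. sym_bar A (i,a) (i,a))" unfolding S_def .
qed


lemma var_bound:
  fixes d :: nat and A :: bmat
  assumes g1: "good \<mu>1 \<kappa>1" and g2: "good \<mu>2 \<kappa>2"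
  shows "prob_space.variance (PiM {..<d} (\<lambda>_. \<mu>1) \<Otimes>\<^sub>M PiM {..<d} (\<lambda>_. \<mu>2))
            (\<lambda>\<omega>. qform d A (kron (fst \<omega>) (snd \<omega>)))
     \<le> 2 * frob_sq d (ptr1 d (sym_bar A)) + 2 * frob_sq d (ptr2 d (sym_bar A)) + 4 * bfrob_sq d (sym_bar A)"
proof -
  define S where "S = sym_bar A"
  define P where "P = PiM {..<d} (\<lambda>_. \<mu>1) \<Otimes>\<^sub>M PiM {..<d} (\<lambda>_. \<mu>2)"
  define Q where "Q = (\<lambda>z. qform d A (kron (fst z) (snd z)))"
  interpret p1: prob_space "PiM {..<d} (\<lambda>_. \<mu>1)" by (rule good_PiM[OF g1])
  interpret p2: prob_space "PiM {..<d} (\<lambda>_. \<mu>2)" by (rule good_PiM[OF g2])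
  interpret pp: pair_prob_space "PiM {..<d} (\<lambda>_. \<mu>1)" "PiM {..<d} (\<lambda>_. \<mu>2)" by unfold_locales
  have k1: "-2 \<le> \<kappa>1" "\<kappa>1 \<le> 0" and k2: "-2 \<le> \<kappa>2" "\<kappa>2 \<le> 0"
    using g1 g2 by (auto simp: good_def)
  note pm = pair_moments[OF g1 g2, of d A]
  have var: "pp.variance Q = integral\<^sup>L P (\<lambda>z. (Q z)\<^sup>2) - (integral\<^sup>L P Q)\<^sup>2"
    unfolding P_def Q_def by (rule pp.variance_eq) (use pm in auto)
  define T where "T = (\<Sum>i<d. \<Sum>a<d. S (i,a) (i,a))"
  define F1 where "F1 = (\<Sum>a<d. \<Sum>b<d. (ptr1 d S a b)\<^sup>2)"
  define F2 where "F2 = (\<Sum>i<d. \<Sum>j<d. (\<Sum>a<d. S (i,a) (j,a))\<^sup>2)"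
  define B where "B = (\<Sum>i<d. \<Sum>j<d. \<Sum>a<d. \<Sum>b<d. (S (i,a) (j,b))\<^sup>2)"
  define X where "X = (\<Sum>a<d. (ptr1 d S a a)\<^sup>2)"
  define Y where "Y = (\<Sum>i<d. \<Sum>j<d. \<Sum>a<d. (S (i,a) (j,a))\<^sup>2)"
  define Z where "Z = (\<Sum>i<d. (\<Sum>a<d. S (i,a) (i,a))\<^sup>2)"
  define W where "W = (\<Sum>i<d. \<Sum>a<d. \<Sum>b<d. (S (i,a) (i,b))\<^sup>2)"
  define V where "V = (\<Sum>i<d. \<Sum>a<d. (S (i,a) (i,a))\<^sup>2)"
  have trT: "(\<Sum>a<d. ptr1 d S a a) = T"
    unfolding ptr1_def T_def by (rule sum.swap)
  have E1: "integral\<^sup>L P Q = T" unfolding P_def Q_def T_def S_def by (rule pm(2))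
  have E2: "integral\<^sup>L P (\<lambda>z. (Q z)\<^sup>2) = T\<^sup>2 + 2 * F1 + \<kappa>2 * X + 2 * (F2 + 2 * B + \<kappa>2 * Y)
      + \<kappa>1 * (Z + 2 * W + \<kappa>2 * V)"
    unfolding P_def Q_def pm(4) trT[unfolded S_def, symmetric]
    unfolding T_def F1_def X_def F2_def B_def Y_def Z_def W_def V_def S_def
    by (simp add: sum.distrib sum_distrib_left)
  have F1e: "frob_sq d (ptr1 d S) = F1" unfolding frob_sq_def F1_def ..
  have F2e: "frob_sq d (ptr2 d S) = F2" unfolding frob_sq_def F2_def ptr2_def ..
  have Be: "bfrob_sq d S = B"
    unfolding bfrob_sq_def B_def sum_pair
    by (rule sum.cong[OF refl]) (rule sum.swap)
  have X0: "X \<ge> 0" unfolding X_def by (intro sum_nonneg) simp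
  have Y0: "Y \<ge> 0" unfolding Y_def by (intro sum_nonneg) simp
  have Z0: "Z \<ge> 0" unfolding Z_def by (intro sum_nonneg) simp
  have V0: "V \<ge> 0" unfolding V_def by (intro sum_nonneg) simp
  have VW: "V \<le> W" unfolding V_def W_def
  proof (intro sum_mono)
    fix i a assume "i \<in> {..<d}" "a \<in> {..<d}"
    then show "(S (i,a) (i,a))\<^sup>2 \<le> (\<Sum>b<d. (S (i,a) (i,b))\<^sup>2)"
      by (intro member_le_sum[where f="\<lambda>b. (S (i,a) (i,b))\<^sup>2"]) auto
  qed
  have br: "Z + 2 * W + \<kappa>2 * V \<ge> 0"
  proof -
    have "\<kappa>2 * V \<ge> -2 * V" using k2 V0 by (intro mult_right_mono) auto
    then show ?thesis using Z0 VW by linarith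
  qed
  have n1: "\<kappa>1 * (Z + 2 * W + \<kappa>2 * V) \<le> 0" using k1 br by (intro mult_nonpos_nonneg) auto
  have n2: "\<kappa>2 * X \<le> 0" using k2 X0 by (intro mult_nonpos_nonneg) auto
  have n3: "\<kappa>2 * Y \<le> 0" using k2 Y0 by (intro mult_nonpos_nonneg) auto
  have "pp.variance Q = 2 * F1 + 2 * F2 + 4 * B + (\<kappa>2 * X + 2 * (\<kappa>2 * Y) + \<kappa>1 * (Z + 2 * W + \<kappa>2 * V))"
    unfolding var E1 E2 by (simp add: algebra_simps)
  also have "\<dots> \<le> 2 * F1 + 2 * F2 + 4 * B" using n1 n2 n3 by linarith
  finally show ?thesis
    unfolding Q_def F1e[symmetric] F2e[symmetric] Be[symmetric] S_def .
qed

lemma discr: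
  fixes a b c :: real
  assumes h: "\<And>s. 0 \<le> a * s\<^sup>2 + 2 * b * s + c" and a: "0 \<le> a"
  shows "b\<^sup>2 \<le> a * c"
proof (cases "a = 0")
  case True
  show ?thesis
  proof (cases "b = 0")
    case True then show ?thesis using \<open>a = 0\<close> by simp
  next
    case False
    have "0 \<le> a * (-(c+1)/(2*b))\<^sup>2 + 2 * b * (-(c+1)/(2*b)) + c" by (rule h)
    also have "\<dots> = -1" using \<open>a = 0\<close> False by (simp add: field_simps)
    finally show ?thesis by simp
  qed
next
  case False
  then have ap: "a > 0" using a by simp
  have "0 \<le> a * (-b/a)\<^sup>2 + 2 * b * (-b/a) + c" by (rule h)
  also have "\<dots> = c - b\<^sup>2 / a" using ap by (simp add: field_simps power2_eq_square)
  finally have "b\<^sup>2 / a \<le> c" by simp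
  then show ?thesis using ap by (simp add: field_simps)
qed

lemma sum_delta_I:
  fixes f :: "'a \<Rightarrow> real"
  assumes "finite I" "p \<in> I"
  shows "(\<Sum>t\<in>I. (if t = p then f t else 0)) = f p"
  using assms by (simp add: sum.delta)

lemma qform_two:
  fixes A :: bmat
  assumes p: "p \<in> {..<d}\<times>{..<d}" and q: "q \<in> {..<d}\<times>{..<d}" and pq: "p \<noteq> q"
    and sym: "A q p = A p q"
  shows "qform d A (\<lambda>r. s * (if r = p then 1 else 0) + (if r = q then 1 else 0))
     = A p p * s\<^sup>2 + 2 * A p q * s + A q q"
proof -
  let ?I = "{..<d}\<times>{..<d}"
  let ?x = "\<lambda>r. s * (if r = p then 1 else 0) + (if r = q then 1 else (0::real))"
  have inner: "(\<Sum>t\<in>?I. ?x r * A r t * ?x t) = ?x r * (s * A r p + A r q)" for r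
  proof -
    have "(\<Sum>t\<in>?I. ?x r * A r t * ?x t) = (\<Sum>t\<in>?I. ?x r * s * (if t = p then A r t else 0) + ?x r * (if t = q then A r t else 0))"
      by (rule sum.cong) (auto simp: algebra_simps)
    also have "\<dots> = ?x r * s * A r p + ?x r * A r q"
      using p q by (simp add: sum.distrib sum_distrib_left[symmetric] sum_delta_I)
    finally show ?thesis by (simp add: algebra_simps)
  qed
  have "qform d A ?x = (\<Sum>r\<in>?I. ?x r * (s * A r p + A r q))"
    unfolding qform_def by (simp add: inner)
  also have "\<dots> = (\<Sum>r\<in>?I. s * (if r = p then (s * A r p + A r q) else 0) + (if r = q then (s * A r p + A r q) else 0))"
    by (rule sum.cong) (auto simp: algebra_simps)
  also have "\<dots> = s * (s * A p p + A p q) + (s * A q p + A q q)"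
    using p q by (simp add: sum.distrib sum_distrib_left[symmetric] sum_delta_I)
  finally show ?thesis using sym by (simp add: power2_eq_square algebra_simps)
qed

lemma qform_one:
  fixes A :: bmat
  assumes p: "p \<in> {..<d}\<times>{..<d}"
  shows "qform d A (\<lambda>r. if r = p then 1 else 0) = A p p"
proof -
  let ?I = "{..<d}\<times>{..<d}"
  let ?x = "\<lambda>r. if r = p then 1 else (0::real)"
  have inner: "(\<Sum>t\<in>?I. ?x r * A r t * ?x t) = ?x r * A r p" for r
  proof -
    have "(\<Sum>t\<in>?I. ?x r * A r t * ?x t) = (\<Sum>t\<in>?I. if t = p then ?x r * A r t else 0)"
      by (rule sum.cong) auto
    also have "\<dots> = ?x r * A r p" using p by (simp add: sum_delta_I)
    finally show ?thesis .
  qed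
  have "qform d A ?x = (\<Sum>r\<in>?I. ?x r * A r p)"
    unfolding qform_def by (simp add: inner)
  also have "\<dots> = (\<Sum>r\<in>?I. if r = p then A r p else 0)"
    by (rule sum.cong) auto
  also have "\<dots> = A p p" using p by (simp add: sum_delta_I)
  finally show ?thesis .
qed

lemma psd_diag:
  assumes "bpsd d A" "p \<in> {..<d}\<times>{..<d}"
  shows "0 \<le> A p p"
  using assms qform_one[of p d A] unfolding bpsd_def by metis

lemma psd_cs:
  assumes ps: "bpsd d A" and p: "p \<in> {..<d}\<times>{..<d}" and q: "q \<in> {..<d}\<times>{..<d}"
  shows "(A p q)\<^sup>2 \<le> A p p * A q q"
proof (cases "p = q")
  case True then show ?thesis by (simp add: power2_eq_square)
next
  case False
  have sym: "A q p = A p q" using ps p q unfolding bpsd_def by auto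
  have "0 \<le> A p p * s\<^sup>2 + 2 * A p q * s + A q q" for s
  proof -
    have "0 \<le> qform d A (\<lambda>r. s * (if r = p then 1 else 0) + (if r = q then 1 else 0))"
      using ps unfolding bpsd_def by blast
    then show ?thesis unfolding qform_two[OF p q False sym] .
  qed
  then show ?thesis by (rule discr) (rule psd_diag[OF ps p])
qed

lemma CS2:
  fixes c \<alpha> \<beta> :: "'a \<Rightarrow> real"
  assumes "\<And>i. i \<in> I \<Longrightarrow> (c i)\<^sup>2 \<le> \<alpha> i * \<beta> i" "\<And>i. i \<in> I \<Longrightarrow> 0 \<le> \<alpha> i" "\<And>i. i \<in> I \<Longrightarrow> 0 \<le> \<beta> i"
  shows "(\<Sum>i\<in>I. c i)\<^sup>2 \<le> (\<Sum>i\<in>I. \<alpha> i) * (\<Sum>i\<in>I. \<beta> i)"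
proof -
  have ci: "\<bar>c i\<bar> \<le> sqrt (\<alpha> i) * sqrt (\<beta> i)" if "i \<in> I" for i
  proof -
    have "\<bar>c i\<bar> = sqrt ((c i)\<^sup>2)" by simp
    also have "\<dots> \<le> sqrt (\<alpha> i * \<beta> i)" using assms(1)[OF that] by (rule real_sqrt_le_mono)
    also have "\<dots> = sqrt (\<alpha> i) * sqrt (\<beta> i)" by (simp add: real_sqrt_mult)
    finally show ?thesis .
  qed
  have "\<bar>\<Sum>i\<in>I. c i\<bar> \<le> (\<Sum>i\<in>I. \<bar>c i\<bar>)" by (rule sum_abs)
  also have "\<dots> \<le> (\<Sum>i\<in>I. sqrt (\<alpha> i) * sqrt (\<beta> i))" by (intro sum_mono ci)
  finally have le: "\<bar>\<Sum>i\<in>I. c i\<bar> \<le> (\<Sum>i\<in>I. sqrt (\<alpha> i) * sqrt (\<beta> i))" .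
  have "(\<Sum>i\<in>I. c i)\<^sup>2 = \<bar>\<Sum>i\<in>I. c i\<bar>\<^sup>2" by simp
  also have "\<dots> \<le> (\<Sum>i\<in>I. sqrt (\<alpha> i) * sqrt (\<beta> i))\<^sup>2"
    using le by (intro power_mono) auto
  also have "\<dots> \<le> (\<Sum>i\<in>I. (sqrt (\<alpha> i))\<^sup>2) * (\<Sum>i\<in>I. (sqrt (\<beta> i))\<^sup>2)"
    by (rule Cauchy_Schwarz_ineq_sum)
  also have "\<dots> = (\<Sum>i\<in>I. \<alpha> i) * (\<Sum>i\<in>I. \<beta> i)"
  proof -
    have "(\<Sum>i\<in>I. (sqrt (\<alpha> i))\<^sup>2) = (\<Sum>i\<in>I. \<alpha> i)"
      by (rule sum.cong[OF refl]) (simp add: assms(2))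
    moreover have "(\<Sum>i\<in>I. (sqrt (\<beta> i))\<^sup>2) = (\<Sum>i\<in>I. \<beta> i)"
      by (rule sum.cong[OF refl]) (simp add: assms(3))
    ultimately show ?thesis by simp
  qed
  finally show ?thesis .
qed

lemma conv4:
  fixes a b c e :: real
  shows "((a+b+c+e)/4)\<^sup>2 \<le> (a\<^sup>2+b\<^sup>2+c\<^sup>2+e\<^sup>2)/4"
proof -
  have "0 \<le> ((a-b)\<^sup>2+(a-c)\<^sup>2+(a-e)\<^sup>2+(b-c)\<^sup>2+(b-e)\<^sup>2+(c-e)\<^sup>2) / 16" by simp
  moreover have "(a\<^sup>2+b\<^sup>2+c\<^sup>2+e\<^sup>2)/4 - ((a+b+c+e)/4)\<^sup>2 = ((a-b)\<^sup>2+(a-c)\<^sup>2+(a-e)\<^sup>2+(b-c)\<^sup>2+(b-e)\<^sup>2+(c-e)\<^sup>2) / 16"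
    by (simp add: power2_eq_square field_simps)
  ultimately show ?thesis by linarith
qed

lemma swap_mid:
  fixes f :: "nat \<Rightarrow> nat \<Rightarrow> nat \<Rightarrow> nat \<Rightarrow> real"
  shows "(\<Sum>i<d. \<Sum>a<d. \<Sum>j<d. \<Sum>b<d. f i a j b) = (\<Sum>i<d. \<Sum>j<d. \<Sum>a<d. \<Sum>b<d. f i a j b)"
  by (rule sum.cong[OF refl], rule sum.swap)

lemma bound_T:
  fixes d :: nat and A :: bmat
  assumes ps: "bpsd d A"
  shows "2 * frob_sq d (ptr1 d (sym_bar A)) + 2 * frob_sq d (ptr2 d (sym_bar A)) + 4 * bfrob_sq d (sym_bar A)
     \<le> 8 * (btrace d A)\<^sup>2"
proof -
  define Dg where "Dg i a = A (i,a) (i,a)" for i a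
  define T where "T = btrace d A"
  have T: "T = (\<Sum>i<d. \<Sum>a<d. Dg i a)" unfolding T_def btrace_def sum_pair Dg_def ..
  have sym: "A (i,a) (j,b) = A (j,b) (i,a)" if "i<d" "a<d" "j<d" "b<d" for i a j b
    using ps that unfolding bpsd_def by auto
  have cs: "(A (i,a) (j,b))\<^sup>2 \<le> Dg i a * Dg j b" if "i<d" "a<d" "j<d" "b<d" for i a j b
    using psd_cs[OF ps, of "(i,a)" "(j,b)"] that unfolding Dg_def by auto
  have D0: "0 \<le> Dg i a" if "i<d" "a<d" for i a
    using psd_diag[OF ps, of "(i,a)"] that unfolding Dg_def by auto
  have TT: "(\<Sum>a<d. \<Sum>b<d. (\<Sum>i<d. Dg i a) * (\<Sum>i<d. Dg i b)) = T\<^sup>2"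
  proof -
    have e: "(\<Sum>a<d. \<Sum>i<d. Dg i a) = T" unfolding T by (rule sum.swap)
    have "(\<Sum>a<d. \<Sum>b<d. (\<Sum>i<d. Dg i a) * (\<Sum>i<d. Dg i b)) = (\<Sum>a<d. \<Sum>i<d. Dg i a) * (\<Sum>b<d. \<Sum>i<d. Dg i b)"
      by (rule sum_product[symmetric])
    also have "\<dots> = T\<^sup>2" unfolding e by (simp add: power2_eq_square)
    finally show ?thesis .
  qed
  have TT2: "(\<Sum>i<d. \<Sum>j<d. (\<Sum>a<d. Dg i a) * (\<Sum>a<d. Dg j a)) = T\<^sup>2"
    unfolding T by (simp add: power2_eq_square sum_product)
  have p1: "ptr1 d (sym_bar A) a b = (\<Sum>i<d. A (i,a) (i,b))" if "a<d" "b<d" for a b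
    unfolding ptr1_def
    by (rule sum.cong[OF refl]) (use that sym in \<open>auto simp: sym_bar_def ptrans1_def ptrans2_def btrans_def\<close>)
  have F1: "frob_sq d (ptr1 d (sym_bar A)) \<le> T\<^sup>2"
  proof -
    have "frob_sq d (ptr1 d (sym_bar A)) \<le> (\<Sum>a<d. \<Sum>b<d. (\<Sum>i<d. Dg i a) * (\<Sum>i<d. Dg i b))"
      unfolding frob_sq_def
    proof (intro sum_mono)
      fix a b assume "a \<in> {..<d}" "b \<in> {..<d}"
      then show "(ptr1 d (sym_bar A) a b)\<^sup>2 \<le> (\<Sum>i<d. Dg i a) * (\<Sum>i<d. Dg i b)"
        by (simp add: p1) (intro CS2 cs D0, auto)
    qed
    then show ?thesis using TT by simp
  qed
  have p2: "ptr2 d (sym_bar A) i j = (\<Sum>a<d. A (i,a) (j,a))" if "i<d" "j<d" for i j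
    unfolding ptr2_def
    by (rule sum.cong[OF refl]) (use that sym in \<open>auto simp: sym_bar_def ptrans1_def ptrans2_def btrans_def\<close>)
  have F2: "frob_sq d (ptr2 d (sym_bar A)) \<le> T\<^sup>2"
  proof -
    have "frob_sq d (ptr2 d (sym_bar A)) \<le> (\<Sum>i<d. \<Sum>j<d. (\<Sum>a<d. Dg i a) * (\<Sum>a<d. Dg j a))"
      unfolding frob_sq_def
    proof (intro sum_mono)
      fix i j assume "i \<in> {..<d}" "j \<in> {..<d}"
      then show "(ptr2 d (sym_bar A) i j)\<^sup>2 \<le> (\<Sum>a<d. Dg i a) * (\<Sum>a<d. Dg j a)"
        by (simp add: p2) (intro CS2 cs D0, auto)
    qed
    then show ?thesis using TT2 by simp
  qed
  have P1: "(\<Sum>i<d. \<Sum>a<d. \<Sum>j<d. \<Sum>b<d. Dg i a * Dg j b) = T\<^sup>2"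
    unfolding T power2_eq_square prod_expand ..
  have P2: "(\<Sum>i<d. \<Sum>a<d. \<Sum>j<d. \<Sum>b<d. Dg j a * Dg i b) = T\<^sup>2"
  proof -
    have "(\<Sum>i<d. \<Sum>a<d. \<Sum>j<d. \<Sum>b<d. Dg j a * Dg i b) = (\<Sum>i<d. \<Sum>j<d. \<Sum>a<d. \<Sum>b<d. Dg j a * Dg i b)"
      by (rule swap_mid)
    also have "\<dots> = (\<Sum>j<d. \<Sum>i<d. \<Sum>a<d. \<Sum>b<d. Dg j a * Dg i b)" by (rule sum.swap)
    also have "\<dots> = (\<Sum>j<d. \<Sum>a<d. \<Sum>i<d. \<Sum>b<d. Dg j a * Dg i b)"
      by (rule sum.cong[OF refl], rule sum.swap)
    also have "\<dots> = T\<^sup>2" unfolding T power2_eq_square prod_expand ..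
    finally show ?thesis .
  qed
  have Sbound: "(sym_bar A (i,a) (j,b))\<^sup>2 \<le> (Dg i a * Dg j b + Dg j a * Dg i b + Dg i b * Dg j a + Dg j b * Dg i a) / 4"
    if "i<d" "a<d" "j<d" "b<d" for i a j b
  proof -
    have eq: "sym_bar A (i,a) (j,b) = (A (i,a) (j,b) + A (j,a) (i,b) + A (i,b) (j,a) + A (j,b) (i,a)) / 4"
      unfolding sym_bar_def ptrans1_def ptrans2_def btrans_def by simp
    have "(sym_bar A (i,a) (j,b))\<^sup>2 \<le> ((A (i,a) (j,b))\<^sup>2 + (A (j,a) (i,b))\<^sup>2 + (A (i,b) (j,a))\<^sup>2 + (A (j,b) (i,a))\<^sup>2) / 4"
      unfolding eq by (rule conv4)
    also have "\<dots> \<le> (Dg i a * Dg j b + Dg j a * Dg i b + Dg i b * Dg j a + Dg j b * Dg i a) / 4"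
      by (intro divide_right_mono add_mono cs) (use that in auto)
    finally show ?thesis .
  qed
  have Bb: "bfrob_sq d (sym_bar A) \<le> T\<^sup>2"
  proof -
    have "bfrob_sq d (sym_bar A) = (\<Sum>i<d. \<Sum>a<d. \<Sum>j<d. \<Sum>b<d. (sym_bar A (i,a) (j,b))\<^sup>2)"
      unfolding bfrob_sq_def sum_pair ..
    also have "\<dots> \<le> (\<Sum>i<d. \<Sum>a<d. \<Sum>j<d. \<Sum>b<d. (Dg i a * Dg j b + Dg j a * Dg i b + Dg i b * Dg j a + Dg j b * Dg i a) / 4)"
      by (intro sum_mono Sbound) auto
    also have "\<dots> = ((\<Sum>i<d. \<Sum>a<d. \<Sum>j<d. \<Sum>b<d. Dg i a * Dg j b) + (\<Sum>i<d. \<Sum>a<d. \<Sum>j<d. \<Sum>b<d. Dg j a * Dg i b)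
        + (\<Sum>i<d. \<Sum>a<d. \<Sum>j<d. \<Sum>b<d. Dg j a * Dg i b) + (\<Sum>i<d. \<Sum>a<d. \<Sum>j<d. \<Sum>b<d. Dg i a * Dg j b)) / 4"
    proof -
      have pw: "(Dg i a * Dg j b + Dg j a * Dg i b + Dg i b * Dg j a + Dg j b * Dg i a) / 4
          = (Dg i a * Dg j b + Dg j a * Dg i b + Dg j a * Dg i b + Dg i a * Dg j b) / 4" for i a j b
        by (simp add: mult.commute)
      show ?thesis
        apply (simp only: sum.distrib sum_divide_distrib[symmetric])
        apply (simp add: mult.commute)
        done
    qed
    also have "\<dots> = T\<^sup>2" unfolding P1 P2 by simp
    finally show ?thesis .
  qed
  show ?thesis using F1 F2 Bb unfolding T_def by linarith
qed

lemma iid1: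
  fixes f :: "'a \<Rightarrow> real"
  assumes P: "prob_space P" and I: "finite I" and j: "j \<in> I" and f: "integrable P f"
  shows "integrable (PiM I (\<lambda>_. P)) (\<lambda>\<omega>. f (\<omega> j))"
    and "integral\<^sup>L (PiM I (\<lambda>_. P)) (\<lambda>\<omega>. f (\<omega> j)) = integral\<^sup>L P f"
proof -
  interpret prob_space P by fact
  define h where "h m = (\<lambda>t. if m = j then f t else 1)" for m
  have hi: "integrable P (h m)" for m unfolding h_def using f by (cases "m = j") auto
  have hv: "integral\<^sup>L P (h m) = (if m = j then integral\<^sup>L P f else 1)" for m
    unfolding h_def by (cases "m = j") (auto simp: prob_space)
  have eq: "(\<lambda>\<omega>. \<Prod>m\<in>I. h m (\<omega> m)) = (\<lambda>\<omega>. f (\<omega> j))"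
    unfolding h_def using I j by (simp add: prod.delta)
  have "integrable (PiM I (\<lambda>_. P)) (\<lambda>\<omega>. \<Prod>m\<in>I. h m (\<omega> m))"
    by (rule PiM_prod(1)[OF P I]) (rule hi)
  then show "integrable (PiM I (\<lambda>_. P)) (\<lambda>\<omega>. f (\<omega> j))" unfolding eq .
  have "integral\<^sup>L (PiM I (\<lambda>_. P)) (\<lambda>\<omega>. \<Prod>m\<in>I. h m (\<omega> m)) = (\<Prod>m\<in>I. integral\<^sup>L P (h m))"
    by (rule PiM_prod(2)[OF P I]) (rule hi)
  then have "integral\<^sup>L (PiM I (\<lambda>_. P)) (\<lambda>\<omega>. f (\<omega> j)) = (\<Prod>m\<in>I. integral\<^sup>L P (h m))"
    unfolding eq .
  also have "\<dots> = integral\<^sup>L P f" unfolding hv using I j by (simp add: prod.delta)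
  finally show "integral\<^sup>L (PiM I (\<lambda>_. P)) (\<lambda>\<omega>. f (\<omega> j)) = integral\<^sup>L P f" .
qed

lemma prod_two_pts:
  fixes F :: "'i \<Rightarrow> real"
  assumes I: "finite I" and j: "j \<in> I" and k: "k \<in> I" and jk: "j \<noteq> k"
    and one: "\<And>m. m \<in> I \<Longrightarrow> m \<noteq> j \<Longrightarrow> m \<noteq> k \<Longrightarrow> F m = 1"
  shows "(\<Prod>m\<in>I. F m) = F j * F k"
proof -
  have "(\<Prod>m\<in>I. F m) = F j * (\<Prod>m\<in>I - {j}. F m)" using I j by (rule prod.remove)
  also have "(\<Prod>m\<in>I - {j}. F m) = F k * (\<Prod>m\<in>I - {j} - {k}. F m)"
    using I k jk by (intro prod.remove) auto
  also have "(\<Prod>m\<in>I - {j} - {k}. F m) = 1" using one by (intro prod.neutral) auto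
  finally show ?thesis by simp
qed

lemma iid2:
  fixes f g :: "'a \<Rightarrow> real"
  assumes P: "prob_space P" and I: "finite I" and j: "j \<in> I" and k: "k \<in> I" and jk: "j \<noteq> k"
    and f: "integrable P f" and g: "integrable P g"
  shows "integrable (PiM I (\<lambda>_. P)) (\<lambda>\<omega>. f (\<omega> j) * g (\<omega> k))"
    and "integral\<^sup>L (PiM I (\<lambda>_. P)) (\<lambda>\<omega>. f (\<omega> j) * g (\<omega> k)) = integral\<^sup>L P f * integral\<^sup>L P g"
proof -
  interpret prob_space P by fact
  define h where "h m = (\<lambda>t. if m = j then f t else if m = k then g t else 1)" for m
  have hi: "integrable P (h m)" for m unfolding h_def using f g by (cases "m = j"; cases "m = k") auto
  have eq: "(\<lambda>\<omega>. \<Prod>m\<in>I. h m (\<omega> m)) = (\<lambda>\<omega>. f (\<omega> j) * g (\<omega> k))"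
  proof
    fix \<omega> show "(\<Prod>m\<in>I. h m (\<omega> m)) = f (\<omega> j) * g (\<omega> k)"
      using prod_two_pts[OF I j k jk, of "\<lambda>m. h m (\<omega> m)"] jk unfolding h_def by simp
  qed
  have "integrable (PiM I (\<lambda>_. P)) (\<lambda>\<omega>. \<Prod>m\<in>I. h m (\<omega> m))"
    by (rule PiM_prod(1)[OF P I]) (rule hi)
  then show "integrable (PiM I (\<lambda>_. P)) (\<lambda>\<omega>. f (\<omega> j) * g (\<omega> k))" unfolding eq .
  have "integral\<^sup>L (PiM I (\<lambda>_. P)) (\<lambda>\<omega>. \<Prod>m\<in>I. h m (\<omega> m)) = (\<Prod>m\<in>I. integral\<^sup>L P (h m))"
    by (rule PiM_prod(2)[OF P I]) (rule hi)
  then have "integral\<^sup>L (PiM I (\<lambda>_. P)) (\<lambda>\<omega>. f (\<omega> j) * g (\<omega> k)) = (\<Prod>m\<in>I. integral\<^sup>L P (h m))"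
    unfolding eq .
  also have "\<dots> = integral\<^sup>L P (h j) * integral\<^sup>L P (h k)"
    by (rule prod_two_pts[OF I j k jk]) (auto simp: h_def prob_space)
  also have "\<dots> = integral\<^sup>L P f * integral\<^sup>L P g" unfolding h_def using jk by simp
  finally show "integral\<^sup>L (PiM I (\<lambda>_. P)) (\<lambda>\<omega>. f (\<omega> j) * g (\<omega> k)) = integral\<^sup>L P f * integral\<^sup>L P g" .
qed

lemma iid_mean_var:
  fixes Y :: "'a \<Rightarrow> real" and l :: nat
  assumes P: "prob_space P" and iY: "integrable P Y" and iY2: "integrable P (\<lambda>z. (Y z)\<^sup>2)"
    and EY: "integral\<^sup>L P Y = 0" and l: "0 < l"
  shows "integrable (PiM {..<l} (\<lambda>_. P)) (\<lambda>\<omega>. (1 / real l) * (\<Sum>j<l. Y (\<omega> j)))"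
    and "integral\<^sup>L (PiM {..<l} (\<lambda>_. P)) (\<lambda>\<omega>. (1 / real l) * (\<Sum>j<l. Y (\<omega> j))) = 0"
    and "integrable (PiM {..<l} (\<lambda>_. P)) (\<lambda>\<omega>. ((1 / real l) * (\<Sum>j<l. Y (\<omega> j)))\<^sup>2)"
    and "integral\<^sup>L (PiM {..<l} (\<lambda>_. P)) (\<lambda>\<omega>. ((1 / real l) * (\<Sum>j<l. Y (\<omega> j)))\<^sup>2)
           = integral\<^sup>L P (\<lambda>z. (Y z)\<^sup>2) / real l"
proof -
  let ?M = "PiM {..<l} (\<lambda>_. P)"
  have i1: "integrable ?M (\<lambda>\<omega>. Y (\<omega> j))" "integral\<^sup>L ?M (\<lambda>\<omega>. Y (\<omega> j)) = 0" if "j < l" for j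
    using iid1[OF P finite_lessThan _ iY, of j l] that EY by auto
  show "integrable ?M (\<lambda>\<omega>. (1 / real l) * (\<Sum>j<l. Y (\<omega> j)))"
    by (intro integrable_mult_right int_sum1(1) i1(1))
  show "integral\<^sup>L ?M (\<lambda>\<omega>. (1 / real l) * (\<Sum>j<l. Y (\<omega> j))) = 0"
    by (simp add: int_sum1(2)[where g="\<lambda>j \<omega>. Y (\<omega> j)", OF i1(1)] i1(2))
  define c where "c (j::nat) (k::nat) = (if j = k then integral\<^sup>L P (\<lambda>z. (Y z)\<^sup>2) else 0)" for j k
  have i2a: "integrable ?M (\<lambda>\<omega>. Y (\<omega> j) * Y (\<omega> k))" if "j < l" "k < l" for j k
  proof (cases "j = k")
    case True
    have e: "(\<lambda>\<omega>. Y (\<omega> j) * Y (\<omega> k)) = (\<lambda>\<omega>. (\<lambda>z. (Y z)\<^sup>2) (\<omega> j))"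
      using True by (simp add: power2_eq_square)
    show ?thesis
      unfolding e by (rule iid1(1)[OF P finite_lessThan _ iY2]) (use that in simp)
  next
    case False
    show ?thesis
      by (rule iid2(1)[OF P finite_lessThan _ _ False iY iY]) (use that in simp_all)
  qed
  have i2b: "integral\<^sup>L ?M (\<lambda>\<omega>. Y (\<omega> j) * Y (\<omega> k)) = c j k" if "j < l" "k < l" for j k
  proof (cases "j = k")
    case True
    have e: "(\<lambda>\<omega>. Y (\<omega> j) * Y (\<omega> k)) = (\<lambda>\<omega>. (\<lambda>z. (Y z)\<^sup>2) (\<omega> j))"
      using True by (simp add: power2_eq_square)
    have "integral\<^sup>L ?M (\<lambda>\<omega>. (\<lambda>z. (Y z)\<^sup>2) (\<omega> j)) = integral\<^sup>L P (\<lambda>z. (Y z)\<^sup>2)"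
      by (rule iid1(2)[OF P finite_lessThan _ iY2]) (use that in simp)
    then show ?thesis
      unfolding e using True by (simp add: c_def)
  next
    case False
    have "integral\<^sup>L ?M (\<lambda>\<omega>. Y (\<omega> j) * Y (\<omega> k)) = integral\<^sup>L P Y * integral\<^sup>L P Y"
      by (rule iid2(2)[OF P finite_lessThan _ _ False iY iY]) (use that in simp_all)
    then show ?thesis using False EY by (simp add: c_def)
  qed
  have sq: "(\<lambda>\<omega>. ((1 / real l) * (\<Sum>j<l. Y (\<omega> j)))\<^sup>2) =
      (\<lambda>\<omega>. (1 / real l)\<^sup>2 * (\<Sum>j<l. \<Sum>k<l. Y (\<omega> j) * Y (\<omega> k)))"
    by (simp add: power_mult_distrib power2_eq_square sum_product)
  show "integrable ?M (\<lambda>\<omega>. ((1 / real l) * (\<Sum>j<l. Y (\<omega> j)))\<^sup>2)"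
    unfolding sq by (intro integrable_mult_right int_sum2(1) i2a)
  have "integral\<^sup>L ?M (\<lambda>\<omega>. ((1 / real l) * (\<Sum>j<l. Y (\<omega> j)))\<^sup>2)
      = (1 / real l)\<^sup>2 * (\<Sum>j<l. \<Sum>k<l. c j k)"
    unfolding sq
    by (simp add: int_sum2(2)[where g="\<lambda>j k \<omega>. Y (\<omega> j) * Y (\<omega> k)", OF i2a] i2b)
  also have "(\<Sum>j<l. \<Sum>k<l. c j k) = real l * integral\<^sup>L P (\<lambda>z. (Y z)\<^sup>2)"
    unfolding c_def by (simp add: sum.delta)
  finally show "integral\<^sup>L ?M (\<lambda>\<omega>. ((1 / real l) * (\<Sum>j<l. Y (\<omega> j)))\<^sup>2)
           = integral\<^sup>L P (\<lambda>z. (Y z)\<^sup>2) / real l"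
    using l by (simp add: power2_eq_square field_simps)
qed

lemma pick: "D \<in> {rad_vec d, gauss_vec d} \<Longrightarrow> \<exists>\<mu> \<kappa>. good \<mu> \<kappa> \<and> D = PiM {..<d} (\<lambda>_. \<mu>)"
  unfolding rad_vec_def gauss_vec_def using good_rad good_gauss by blast

lemma part1:
  assumes "D1 \<in> {rad_vec d, gauss_vec d}" "D2 \<in> {rad_vec d, gauss_vec d}"
  shows "prob_space.variance (pair_dist D1 D2) (\<lambda>\<omega>. qform d A (kron (fst \<omega>) (snd \<omega>)))
              \<le> 2 * frob_sq d (ptr1 d (sym_bar A)) + 2 * frob_sq d (ptr2 d (sym_bar A))
                 + 4 * bfrob_sq d (sym_bar A)"
proof -
  obtain \<mu>1 \<kappa>1 where g1: "good \<mu>1 \<kappa>1" and D1: "D1 = PiM {..<d} (\<lambda>_. \<mu>1)" using pick[OF assms(1)] by blast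
  obtain \<mu>2 \<kappa>2 where g2: "good \<mu>2 \<kappa>2" and D2: "D2 = PiM {..<d} (\<lambda>_. \<mu>2)" using pick[OF assms(2)] by blast
  show ?thesis unfolding pair_dist_def D1 D2 by (rule var_bound[OF g1 g2])
qed

lemma trace_eq: "(\<Sum>i<d. \<Sum>a<d. sym_bar A (i,a) (i,a)) = btrace d A"
  unfolding btrace_def sum_pair sym_bar_def ptrans1_def ptrans2_def btrans_def by simp

lemma T_nonneg: "bpsd d A \<Longrightarrow> 0 \<le> btrace d A"
  unfolding btrace_def by (intro sum_nonneg psd_diag)

lemma T_zero:
  assumes ps: "bpsd d A" and T0: "btrace d A = 0"
  shows "qform d A x = 0"
proof -
  have diag: "A p p = 0" if "p \<in> {..<d}\<times>{..<d}" for p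
    using T0 psd_diag[OF ps] that unfolding btrace_def
    by (subst (asm) sum_nonneg_eq_0_iff) auto
  have all: "A p q = 0" if "p \<in> {..<d}\<times>{..<d}" "q \<in> {..<d}\<times>{..<d}" for p q
    using psd_cs[OF ps that] diag[OF that(1)] by simp
  show ?thesis unfolding qform_def by (simp add: all)
qed

lemma part2:
  assumes D1: "D1 \<in> {rad_vec d, gauss_vec d}" and D2: "D2 \<in> {rad_vec d, gauss_vec d}"
    and ps: "bpsd d A" and e0: "0 < \<epsilon>" and e1: "\<epsilon> < 1" and lC: "real l \<ge> 24 / \<epsilon>\<^sup>2"
  shows "measure (PiM {..<l} (\<lambda>_. pair_dist D1 D2))
               {\<omega> \<in> space (PiM {..<l} (\<lambda>_. pair_dist D1 D2)).
                  \<bar>hutch d A l \<omega> - btrace d A\<bar> \<le> \<epsilon> * btrace d A} \<ge> 2 / 3"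
proof -
  obtain \<mu>1 \<kappa>1 where g1: "good \<mu>1 \<kappa>1" and D1e: "D1 = PiM {..<d} (\<lambda>_. \<mu>1)" using pick[OF D1] by blast
  obtain \<mu>2 \<kappa>2 where g2: "good \<mu>2 \<kappa>2" and D2e: "D2 = PiM {..<d} (\<lambda>_. \<mu>2)" using pick[OF D2] by blast
  define P where "P = pair_dist D1 D2"
  define Q where "Q = (\<lambda>z. qform d A (kron (fst z) (snd z)))"
  define T where "T = btrace d A"
  define M where "M = PiM {..<l} (\<lambda>_. P)"
  interpret p1: prob_space D1 unfolding D1e by (rule good_PiM[OF g1])
  interpret p2: prob_space D2 unfolding D2e by (rule good_PiM[OF g2])
  interpret pp: pair_prob_space D1 D2 by unfold_locales
  have PP: "prob_space P" unfolding P_def pair_dist_def by (rule pp.P.prob_space_axioms)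
  interpret P: prob_space P by (rule PP)
  interpret MM: prob_space M unfolding M_def by (intro prob_space_PiM PP)
  note pm = pair_moments[OF g1 g2, where d=d and A=A, folded D1e D2e pair_dist_def P_def, folded Q_def]
  have iQ: "integrable P Q" and EQ: "integral\<^sup>L P Q = T" and iQ2: "integrable P (\<lambda>z. (Q z)\<^sup>2)"
    using pm(1,2,3) trace_eq[where d=d and A=A] unfolding T_def by (auto simp: Q_def)
  have var: "P.variance Q \<le> 8 * T\<^sup>2"
    using part1[OF D1 D2, where A=A] bound_T[OF ps] unfolding P_def Q_def T_def by linarith
  have e2: "0 < \<epsilon>\<^sup>2" using e0 by simp
  have lpos: "0 < real l" using lC e2 by (smt (verit) divide_pos_pos)
  then have l0: "0 < l" by simp
  have le2: "24 \<le> real l * \<epsilon>\<^sup>2" using lC e2 by (simp add: field_simps)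
  define Y where "Y = (\<lambda>z. Q z - T)"
  have iY: "integrable P Y" unfolding Y_def using iQ by simp
  have iY2: "integrable P (\<lambda>z. (Y z)\<^sup>2)"
  proof -
    have "(\<lambda>z. (Y z)\<^sup>2) = (\<lambda>z. (Q z)\<^sup>2 - 2 * T * Q z + T\<^sup>2)"
      unfolding Y_def by (simp add: power2_eq_square algebra_simps)
    then show ?thesis using iQ iQ2 by simp
  qed
  have EY: "integral\<^sup>L P Y = 0" unfolding Y_def using iQ EQ by (simp add: P.prob_space)
  have EY2: "integral\<^sup>L P (\<lambda>z. (Y z)\<^sup>2) = P.variance Q" unfolding Y_def EQ ..
  define G where "G = (\<lambda>\<omega>. (1 / real l) * (\<Sum>j<l. Y (\<omega> j)))"
  note iv0 = iid_mean_var[OF PP iY iY2 EY l0]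
  have iG: "integrable M G" using iv0(1) unfolding G_def M_def .
  have EG: "integral\<^sup>L M G = 0" using iv0(2) unfolding G_def M_def .
  have iG2: "integrable M (\<lambda>\<omega>. (G \<omega>)\<^sup>2)" using iv0(3) unfolding G_def M_def .
  have EG2: "integral\<^sup>L M (\<lambda>\<omega>. (G \<omega>)\<^sup>2) = integral\<^sup>L P (\<lambda>z. (Y z)\<^sup>2) / real l"
    using iv0(4) unfolding G_def M_def .
  have hG: "hutch d A l \<omega> - T = G \<omega>" for \<omega>
  proof -
    have "G \<omega> = (1 / real l) * (\<Sum>j<l. Q (\<omega> j)) - (1 / real l) * (real l * T)"
      unfolding G_def Y_def by (simp add: sum_subtractf right_diff_distrib)
    also have "\<dots> = hutch d A l \<omega> - T"
      unfolding hutch_def Q_def using lpos by simp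
    finally show ?thesis by simp
  qed
  have T0: "0 \<le> T" unfolding T_def by (rule T_nonneg[OF ps])
  show ?thesis
  proof (cases "T = 0")
    case True
    have "hutch d A l \<omega> = 0" for \<omega>
      unfolding hutch_def using T_zero[OF ps True[unfolded T_def]] by simp
    then have "{\<omega> \<in> space M. \<bar>hutch d A l \<omega> - btrace d A\<bar> \<le> \<epsilon> * btrace d A} = space M"
      using True unfolding T_def by auto
    then show ?thesis unfolding M_def[symmetric] P_def[symmetric] using MM.prob_space by simp
  next
    case False
    then have Tp: "0 < T" using T0 by simp
    define a where "a = \<epsilon> * T"
    have ap: "0 < a" unfolding a_def using e0 Tp by simp
    have Gm[measurable]: "G \<in> borel_measurable M" using iG by auto
    have cheb: "MM.prob {\<omega> \<in> space M. a \<le> \<bar>G \<omega> - MM.expectation G\<bar>} \<le> MM.variance G / a\<^sup>2"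
      by (rule MM.Chebyshev_inequality) (use iG2 ap in auto)
    have varG: "MM.variance G = P.variance Q / real l"
      using EG EG2 EY2 by simp
    have bnd: "MM.variance G / a\<^sup>2 \<le> 1 / 3"
    proof -
      have "MM.variance G / a\<^sup>2 = P.variance Q / (real l * a\<^sup>2)" unfolding varG by (simp add: field_simps)
      also have "\<dots> \<le> 1 / 3"
      proof -
        have pos: "0 < real l * a\<^sup>2" using lpos ap by simp
        have "3 * P.variance Q \<le> 24 * T\<^sup>2" using var by simp
        also have "\<dots> \<le> real l * \<epsilon>\<^sup>2 * T\<^sup>2" using le2 by (intro mult_right_mono) auto
        also have "\<dots> = real l * a\<^sup>2" unfolding a_def by (simp add: power_mult_distrib)
        finally show ?thesis using pos by (simp add: field_simps)
      qed
      finally show ?thesis .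
    qed
    have sub: "{\<omega> \<in> space M. a < \<bar>G \<omega>\<bar>} \<subseteq> {\<omega> \<in> space M. a \<le> \<bar>G \<omega> - MM.expectation G\<bar>}"
      using EG by auto
    have meas: "{\<omega> \<in> space M. a \<le> \<bar>G \<omega> - MM.expectation G\<bar>} \<in> MM.events" by measurable
    have meas2: "{\<omega> \<in> space M. a < \<bar>G \<omega>\<bar>} \<in> MM.events" by measurable
    have "MM.prob {\<omega> \<in> space M. a < \<bar>G \<omega>\<bar>} \<le> 1 / 3"
      using MM.finite_measure_mono[OF sub meas] cheb bnd by linarith
    moreover have "{\<omega> \<in> space M. \<bar>hutch d A l \<omega> - btrace d A\<bar> \<le> \<epsilon> * btrace d A}
        = space M - {\<omega> \<in> space M. a < \<bar>G \<omega>\<bar>}"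
      unfolding a_def T_def[symmetric] hG by auto
    ultimately show ?thesis
      unfolding M_def[symmetric] P_def[symmetric] using MM.prob_compl[OF meas2] by simp
  qed
qed

theorem mainTheorem5:
  shows "(\<forall>(d::nat) (A::bmat) D1 D2.
            D1 \<in> {rad_vec d, gauss_vec d} \<longrightarrow> D2 \<in> {rad_vec d, gauss_vec d} \<longrightarrow>
            prob_space.variance (pair_dist D1 D2) (\<lambda>\<omega>. qform d A (kron (fst \<omega>) (snd \<omega>)))
              \<le> 2 * frob_sq d (ptr1 d (sym_bar A)) + 2 * frob_sq d (ptr2 d (sym_bar A))
                 + 4 * bfrob_sq d (sym_bar A))
       \<and> (\<exists>C::real. \<forall>(d::nat) (A::bmat) D1 D2 (\<epsilon>::real) (l::nat).
            D1 \<in> {rad_vec d, gauss_vec d} \<longrightarrow> D2 \<in> {rad_vec d, gauss_vec d} \<longrightarrow>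
            bpsd d A \<longrightarrow> 0 < \<epsilon> \<longrightarrow> \<epsilon> < 1 \<longrightarrow> real l \<ge> C / \<epsilon>\<^sup>2 \<longrightarrow>
            measure (PiM {..<l} (\<lambda>_. pair_dist D1 D2))
               {\<omega> \<in> space (PiM {..<l} (\<lambda>_. pair_dist D1 D2)).
                  \<bar>hutch d A l \<omega> - btrace d A\<bar> \<le> \<epsilon> * btrace d A} \<ge> 2 / 3)"
proof (intro conjI allI impI)
  fix d :: nat and A :: bmat and D1 D2
  assume "D1 \<in> {rad_vec d, gauss_vec d}" "D2 \<in> {rad_vec d, gauss_vec d}"
  then show "prob_space.variance (pair_dist D1 D2) (\<lambda>\<omega>. qform d A (kron (fst \<omega>) (snd \<omega>)))
              \<le> 2 * frob_sq d (ptr1 d (sym_bar A)) + 2 * frob_sq d (ptr2 d (sym_bar A))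
                 + 4 * bfrob_sq d (sym_bar A)" by (rule part1)
next
  show "\<exists>C::real. \<forall>(d::nat) (A::bmat) D1 D2 (\<epsilon>::real) (l::nat).
            D1 \<in> {rad_vec d, gauss_vec d} \<longrightarrow> D2 \<in> {rad_vec d, gauss_vec d} \<longrightarrow>
            bpsd d A \<longrightarrow> 0 < \<epsilon> \<longrightarrow> \<epsilon> < 1 \<longrightarrow> real l \<ge> C / \<epsilon>\<^sup>2 \<longrightarrow>
            measure (PiM {..<l} (\<lambda>_. pair_dist D1 D2))
               {\<omega> \<in> space (PiM {..<l} (\<lambda>_. pair_dist D1 D2)).
                  \<bar>hutch d A l \<omega> - btrace d A\<bar> \<le> \<epsilon> * btrace d A} \<ge> 2 / 3"
    by (rule exI[of _ 24]) (blast intro: part2)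
qed

end
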